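(* Let $K\ge1$ be fixed, $\boldsymbol{\beta}_0\in\mathbb{R}^K$ with $k_0$ nonzero coordinates, and for each $n>K$ let the $n\times K$ design matrix $\mathbf{X}$ with rows $\mathbf{x}_i$ satisfy $\mathbf{X}^t\mathbf{X}=n\mathbf{I}$, $\sum_{i=1}^n x_{i,k}=0$ for each $k$, and $\max_{1\le i\le n}\|\mathbf{x}_i\|/\sqrt n\to0$. Suppose $Y_i=\mathbf{x}_i^t\boldsymbol{\beta}_0+\varepsilon_i$ with $\varepsilon_i$ independent, $\mathbb{E}(\varepsilon_i)=0$, $\mathbb{E}(\varepsilon_i^2)=\sigma_0^2>0$, $\mathbb{E}(\varepsilon_i^4)\le M<\infty$. Consider the rescaled spike and slab model with $\lambda_n=n$, and priors with $\pi\{\gamma_k\ge\eta_0\}=1$ for some $\eta_0>0$ and every $k$, and $\mu\{\sigma^2\le s_0^2\}=1$ for some $0<s_0^2<\infty$. Let $C_n\to\infty$ be a positive increasing sequence with $C_n/\sqrt n\to0$, $\widehat{\mathcal{M}}_n=(\widehat{\mathcal{M}}_{1,n},\dots,\widehat{\mathcal{M}}_{K,n})^t=\mathcal{M}_n(C_n)$, and $\hat k_n=\sum_{k=1}^K\mathbb{I}\{\widehat{\mathcal{M}}_{k,n}\ne0\}$. Then $\hat k_n\to k_0$ in probability.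
   Context: $\mathbf{Y}=(Y_1,\dots,Y_n)^t$, OLS $\widehat{\boldsymbol{\beta}}_n^\circ=(\mathbf{X}^t\mathbf{X})^{-1}\mathbf{X}^t\mathbf{Y}$, $\widehat\sigma_n^2=\|\mathbf{Y}-\mathbf{X}\widehat{\boldsymbol{\beta}}_n^\circ\|^2/(n-K)$. Rescaled spike and slab model: $Y_i^*=\widehat\sigma_n^{-1}n^{1/2}Y_i$, and as data $\mathbf{Y}^*$ is modeled by $(Y_i^*\mid\boldsymbol{\beta},\sigma^2)$ independent $N(\mathbf{x}_i^t\boldsymbol{\beta},\sigma^2\lambda_n)$, $(\boldsymbol{\beta}\mid\boldsymbol{\gamma})\sim N(\mathbf{0},\mathrm{diag}(\gamma_1,\dots,\gamma_K))$, $\boldsymbol{\gamma}\sim\pi$, $\sigma^2\sim\mu$, with $\pi\{\gamma_k>0\}=1$, $\mu\{\sigma^2>0\}=1$. $\widehat{\boldsymbol{\beta}}_n^*=(\widehat\beta_{1,n}^*,\dots,\widehat\beta_{K,n}^* )^t$ is the posterior mean of $\boldsymbol{\beta}$ given $\mathbf{Y}^*$, and for $C>0$, $\mathcal{M}_n(C)=(\mathbb{I}\{|\widehat\beta_{1,n}^*|\ge C\},\dots,\mathbb{I}\{|\widehat\beta_{K,n}^*|\ge C\})^t$. *)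

theory Defs
  imports "HOL-Probability.Probability"
begin

text \<open>Design rows: X i :: real^'K is the i-th row (i < n) of the n x K design matrix.\<close>

definition design_gram :: "nat \<Rightarrow> (nat \<Rightarrow> real^'K) \<Rightarrow> real^'K^'K" where
  "design_gram n X = (\<chi> j k. \<Sum>i<n. X i $ j * X i $ k)"

definition ols :: "nat \<Rightarrow> (nat \<Rightarrow> real^'K) \<Rightarrow> (nat \<Rightarrow> real) \<Rightarrow> real^'K" where
  "ols n X Y = matrix_inv (design_gram n X) *v (\<Sum>i<n. Y i *\<^sub>R X i)"

definition sigma_hat_sq :: "nat \<Rightarrow> (nat \<Rightarrow> real^'K) \<Rightarrow> (nat \<Rightarrow> real) \<Rightarrow> real" where
  "sigma_hat_sq n X Y =
     (\<Sum>i<n. (Y i - X i \<bullet> ols n X Y)\<^sup>2) / (real n - real CARD('K))"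

definition rescaled_resp :: "nat \<Rightarrow> (nat \<Rightarrow> real^'K) \<Rightarrow> (nat \<Rightarrow> real) \<Rightarrow> nat \<Rightarrow> real" where
  "rescaled_resp n X Y i = sqrt (real n) / sqrt (sigma_hat_sq n X Y) * Y i"

definition ss_lik :: "nat \<Rightarrow> (nat \<Rightarrow> real^'K) \<Rightarrow> real \<Rightarrow> (nat \<Rightarrow> real) \<Rightarrow> real^'K \<Rightarrow> real \<Rightarrow> real" where
  "ss_lik n X lam ystar b s = (\<Prod>i<n. normal_density (X i \<bullet> b) (sqrt (s * lam)) (ystar i))"

definition slab_dens :: "real^'K \<Rightarrow> real^'K \<Rightarrow> real" where
  "slab_dens g b = (\<Prod>k\<in>UNIV. normal_density 0 (sqrt (g $ k)) (b $ k))"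

text \<open>Posterior mean of beta given Y*, with gamma ~ pi and sigma^2 ~ mu independent.\<close>
definition ss_post_mean :: "nat \<Rightarrow> (nat \<Rightarrow> real^'K) \<Rightarrow> real \<Rightarrow> (real^'K) measure \<Rightarrow> real measure
      \<Rightarrow> (nat \<Rightarrow> real) \<Rightarrow> real^'K" where
  "ss_post_mean n X lam pr mu ystar =
     (\<chi> k. (\<integral>g. (\<integral>s. (\<integral>b. b $ k * ss_lik n X lam ystar b s * slab_dens g b \<partial>lborel) \<partial>mu) \<partial>pr)
          / (\<integral>g. (\<integral>s. (\<integral>b. ss_lik n X lam ystar b s * slab_dens g b \<partial>lborel) \<partial>mu) \<partial>pr))"

definition sel_vector :: "nat \<Rightarrow> (nat \<Rightarrow> real^'K) \<Rightarrow> real \<Rightarrow> (real^'K) measure \<Rightarrow> real measure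
      \<Rightarrow> (nat \<Rightarrow> real) \<Rightarrow> real \<Rightarrow> real^'K" where
  "sel_vector n X lam pr mu Y C =
     (\<chi> k. if \<bar>ss_post_mean n X lam pr mu (rescaled_resp n X Y) $ k\<bar> \<ge> C then 1 else 0)"

definition conv_in_prob :: "'a measure \<Rightarrow> (nat \<Rightarrow> 'a \<Rightarrow> real) \<Rightarrow> real \<Rightarrow> bool" where
  "conv_in_prob P Z c \<longleftrightarrow>
     (\<forall>e>0. ((\<lambda>n. measure P {\<omega> \<in> space P. \<bar>Z n \<omega> - c\<bar> > e}) \<longlongrightarrow> 0) sequentially)"

end

theory Submission
  imports Defs
begin

lemma integral_lborel_prod_basis:
  fixes f :: "'a::euclidean_space \<Rightarrow> real \<Rightarrow> real"
  assumes int: "\<And>b. b \<in> Basis \<Longrightarrow> integrable lborel (f b)"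
  shows "integrable lborel (\<lambda>x::'a. \<Prod>b\<in>Basis. f b (x \<bullet> b))"
    and "(\<integral>x. (\<Prod>b\<in>Basis. f b (x \<bullet> b)) \<partial>(lborel::'a measure)) = (\<Prod>b\<in>Basis. integral\<^sup>L lborel (f b))"
proof -
  interpret finite_product_sigma_finite "\<lambda>_. lborel::real measure" "Basis::'a set"
    by standard simp
  have [measurable]: "\<And>b. b \<in> Basis \<Longrightarrow> f b \<in> borel_measurable borel"
    using int by auto
  have m: "(\<lambda>f. \<Sum>b\<in>Basis. f b *\<^sub>R b) \<in> measurable (\<Pi>\<^sub>M b\<in>Basis. lborel) (borel::'a measure)"
    by measurable
  have mF: "(\<lambda>x::'a. \<Prod>b\<in>Basis. f b (x \<bullet> b)) \<in> borel_measurable borel"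
    by measurable
  have e: "\<And>g. (\<Prod>b\<in>Basis. f b ((\<Sum>c\<in>Basis. g c *\<^sub>R c) \<bullet> b)) = (\<Prod>b\<in>Basis. f b (g b))"
    by (intro prod.cong refl) (simp add: inner_sum_left inner_Basis if_distrib sum.delta cong: if_cong)
  have i2: "integrable (\<Pi>\<^sub>M b\<in>Basis. lborel) (\<lambda>g. \<Prod>b\<in>Basis. f b (g b))"
    by (intro product_integrable_prod int) simp
  show "integrable lborel (\<lambda>x::'a. \<Prod>b\<in>Basis. f b (x \<bullet> b))"
    apply (subst lborel_eq)
    apply (subst integrable_distr_eq[OF m mF])
    using i2 by (simp add: e)
  show "(\<integral>x. (\<Prod>b\<in>Basis. f b (x \<bullet> b)) \<partial>(lborel::'a measure)) = (\<Prod>b\<in>Basis. integral\<^sup>L lborel (f b))"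
    apply (subst lborel_eq)
    apply (subst integral_distr[OF m mF])
    by (simp add: e product_integral_prod int)
qed

lemma integral_lborel_prod_vec:
  fixes f :: "'K::finite \<Rightarrow> real \<Rightarrow> real"
  assumes int: "\<And>k. integrable lborel (f k)"
  shows "integrable lborel (\<lambda>x::real^'K. \<Prod>k\<in>UNIV. f k (x $ k))"
    and "(\<integral>x. (\<Prod>k\<in>UNIV. f k (x $ k)) \<partial>(lborel::(real^'K) measure)) = (\<Prod>k\<in>UNIV. integral\<^sup>L lborel (f k))"
proof -
  define F where "F b = f (SOME k. b = axis k (1::real))" for b :: "real^'K"
  have B: "(Basis :: (real^'K) set) = (\<lambda>k. axis k 1) ` UNIV"
    by (auto simp: Basis_vec_def)
  have inj: "inj (\<lambda>k::'K. axis k (1::real))"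
    by (auto simp: inj_def axis_eq_axis)
  have Fk: "F (axis k 1) = f k" for k
    unfolding F_def by (rule arg_cong[where f=f]) (auto simp: axis_eq_axis)
  have e1: "(\<Prod>b\<in>Basis. F b (x \<bullet> b)) = (\<Prod>k\<in>UNIV. f k (x $ k))" for x :: "real^'K"
    unfolding B by (subst prod.reindex[OF inj]) (simp add: Fk inner_axis)
  have e2: "(\<Prod>b\<in>Basis. integral\<^sup>L lborel (F b)) = (\<Prod>k\<in>UNIV. integral\<^sup>L lborel (f k))"
    unfolding B by (subst prod.reindex[OF inj]) (simp add: Fk)
  have intF: "\<And>b. b \<in> (Basis :: (real^'K) set) \<Longrightarrow> integrable lborel (F b)"
    unfolding B using int Fk by auto
  show "integrable lborel (\<lambda>x::real^'K. \<Prod>k\<in>UNIV. f k (x $ k))"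
    using integral_lborel_prod_basis(1)[of F, OF intF] by (simp add: e1)
  show "(\<integral>x. (\<Prod>k\<in>UNIV. f k (x $ k)) \<partial>(lborel::(real^'K) measure)) = (\<Prod>k\<in>UNIV. integral\<^sup>L lborel (f k))"
    using integral_lborel_prod_basis(2)[of F, OF intF] by (simp add: e1 e2)
qed

lemma gauss1d_eq:
  fixes v G z nn :: real
  assumes v: "v > 0" and G: "G > 0" and nn: "nn > 0"
  defines "V \<equiv> (v  *  G) / (nn  *  G + v)" and "m \<equiv> z * G/(nn * G+v)"
  shows "exp((2 * t * z - nn * t\<^sup>2)/(2 * v))  *  normal_density 0 (sqrt G) t
        = (exp(m\<^sup>2/(2 * V))  *  sqrt(V/G))  *  normal_density m (sqrt V) t"
proof -
  have d: "nn * G+v > 0" using v G nn by (simp add: add_pos_pos)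
  have V: "V > 0" unfolding V_def using v G d by simp
  have s1: "sqrt(V/G)  *  (1/sqrt(2 * pi * V)) = 1/sqrt(2 * pi * G)"
    using V G by (simp add: real_sqrt_divide real_sqrt_mult field_simps)
  define a where "a = nn / v + 1 / G"
  have a: "a > 0" unfolding a_def using v G nn by (simp add: add_pos_pos)
  have Va: "V = 1 / a" unfolding V_def a_def using v G d by (simp add: field_simps)
  have ma: "m = z / v * V" unfolding V_def m_def using v G d by (simp add: field_simps)
  have ex: "(2 * t * z - nn * t\<^sup>2) / (2 * v) + (-(t - 0)\<^sup>2 / (2 * G)) = m\<^sup>2 / (2 * V) + (-(t - m)\<^sup>2 / (2 * V))"
  proof -
    have "(2 * t * z - nn * t\<^sup>2) / (2 * v) + (-(t - 0)\<^sup>2 / (2 * G)) = t * z / v - t\<^sup>2 * a / 2"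
      unfolding a_def using v G by (simp add: field_simps power2_eq_square)
    moreover have "m\<^sup>2 / (2 * V) + (-(t - m)\<^sup>2 / (2 * V)) = t * m * a - t\<^sup>2 * a / 2"
      unfolding Va using a by (simp add: field_simps power2_eq_square)
    moreover have "t * m * a = t * z / v"
      unfolding ma Va using a v by simp
    ultimately show ?thesis by simp
  qed
  have "exp((2 * t * z - nn * t\<^sup>2)/(2 * v))  *  normal_density 0 (sqrt G) t
     = (1/sqrt(2 * pi * G))  *  exp((2 * t * z - nn * t\<^sup>2)/(2 * v) + (-(t - 0)\<^sup>2/(2 * G)))"
    using G by (simp add: normal_density_def exp_add[symmetric])
  also have "\<dots> = (sqrt(V/G)  *  (1/sqrt(2 * pi * V)))  *  exp(m\<^sup>2/(2 * V) + (-(t-m)\<^sup>2/(2 * V)))"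
    by (simp only: s1 ex)
  also have "\<dots> = (sqrt(V/G)  *  (1/sqrt(2 * pi * V)))  *  (exp(m\<^sup>2/(2 * V)) * exp(-(t-m)\<^sup>2/(2 * V)))"
    by (simp only: exp_add)
  also have "\<dots> = (exp(m\<^sup>2/(2 * V))  *  sqrt(V/G))  *  normal_density m (sqrt V) t"
    using V by (simp add: normal_density_def)
  finally show ?thesis .
qed

definition gV :: "real \<Rightarrow> real \<Rightarrow> real \<Rightarrow> real" where
  "gV nn v G = (v * G) / (nn * G + v)"
definition gm :: "real \<Rightarrow> real \<Rightarrow> real \<Rightarrow> real \<Rightarrow> real" where
  "gm nn v G z = (z * G) / (nn * G + v)"
definition gk :: "real \<Rightarrow> real \<Rightarrow> real \<Rightarrow> real \<Rightarrow> real" where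
  "gk nn v G z = exp ((gm nn v G z)\<^sup>2 / (2 * gV nn v G)) * sqrt (gV nn v G / G)"

definition phi1 :: "real \<Rightarrow> real \<Rightarrow> real \<Rightarrow> real \<Rightarrow> real \<Rightarrow> real" where
  "phi1 nn v G z t = exp ((2 * t * z - nn * t\<^sup>2) / (2 * v)) * normal_density 0 (sqrt G) t"

lemma nd_zero_sigma: "normal_density m 0 x = 0"
  by (simp add: normal_density_def)

lemma gauss1d:
  fixes v G z nn :: real
  assumes v: "v > 0" and G: "G \<ge> 0" and nn: "nn > 0"
  shows "integrable lborel (phi1 nn v G z)"
    and "(\<integral>t. phi1 nn v G z t \<partial>lborel) = gk nn v G z"
    and "integrable lborel (\<lambda>t. t * phi1 nn v G z t)"
    and "(\<integral>t. t * phi1 nn v G z t \<partial>lborel) = gm nn v G z * gk nn v G z"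
proof -
  have "integrable lborel (phi1 nn v G z) \<and> (\<integral>t. phi1 nn v G z t \<partial>lborel) = gk nn v G z \<and>
     integrable lborel (\<lambda>t. t * phi1 nn v G z t) \<and>
     (\<integral>t. t * phi1 nn v G z t \<partial>lborel) = gm nn v G z * gk nn v G z"
  proof (cases "G = 0")
    case True
    then have "phi1 nn v G z = (\<lambda>t. 0)" by (auto simp: phi1_def nd_zero_sigma)
    then show ?thesis using True by (simp add: gk_def gV_def)
  next
    case False
    then have Gp: "G > 0" using G by simp
    have d: "nn * G + v > 0" using v Gp nn by (simp add: add_pos_pos)
    have Vp: "gV nn v G > 0" unfolding gV_def using v Gp d by simp
    have eq: "phi1 nn v G z = (\<lambda>t. gk nn v G z * normal_density (gm nn v G z) (sqrt (gV nn v G)) t)"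
      unfolding phi1_def gk_def gV_def gm_def
      using gauss1d_eq[OF v Gp nn] by auto
    have s: "sqrt (gV nn v G) > 0" using Vp by simp
    let ?N = "normal_density (gm nn v G z) (sqrt (gV nn v G))"
    have i1: "integrable lborel ?N" using integrable_normal_density[OF s] .
    have i0: "integral\<^sup>L lborel ?N = 1" using integral_normal_density[OF s] .
    have i2: "integrable lborel (\<lambda>t. ?N t * t)" using integrable_normal_moment_nz_1[OF s] .
    have i3: "(\<integral>t. ?N t * t \<partial>lborel) = gm nn v G z" using integral_normal_moment_nz_1[OF s] .
    have e2: "(\<lambda>t. t * (gk nn v G z * ?N t)) = (\<lambda>t. gk nn v G z * (?N t * t))"
      by (auto simp: fun_eq_iff)
    show ?thesis unfolding eq e2
      using i0 i1 i2 i3 by simp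
  qed
  then show "integrable lborel (phi1 nn v G z)"
    and "(\<integral>t. phi1 nn v G z t \<partial>lborel) = gk nn v G z"
    and "integrable lborel (\<lambda>t. t * phi1 nn v G z t)"
    and "(\<integral>t. t * phi1 nn v G z t \<partial>lborel) = gm nn v G z * gk nn v G z" by auto
qed

definition Lc :: "nat \<Rightarrow> real \<Rightarrow> real \<Rightarrow> real" where
  "Lc n v Y2 = (1 / sqrt (2 * pi * v)) ^ n * exp (- Y2 / (2 * v))"

definition zvec :: "nat \<Rightarrow> (nat \<Rightarrow> real^'K) \<Rightarrow> (nat \<Rightarrow> real) \<Rightarrow> real^'K" where
  "zvec n X y = (\<Sum>i<n. y i *\<^sub>R X i)"

lemma inner_vec_sum: "(x::real^'K) \<bullet> y = (\<Sum>k\<in>UNIV. x $ k * y $ k)"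
  by (simp add: inner_vec_def)

lemma quad_gram:
  fixes X :: "nat \<Rightarrow> real^'K"
  assumes gram: "\<And>j k. (\<Sum>i<n. X i $ j * X i $ k) = (if j = k then real n else 0)"
  shows "(\<Sum>i<n. (y i - X i \<bullet> b)\<^sup>2) = (\<Sum>i<n. (y i)\<^sup>2) - 2 * (b \<bullet> zvec n X y) + real n * (b \<bullet> b)"
proof -
  have sq: "(\<Sum>i<n. (X i \<bullet> b)\<^sup>2) = real n * (b \<bullet> b)"
  proof -
    have "(\<Sum>i<n. (X i \<bullet> b)\<^sup>2) = (\<Sum>i<n. \<Sum>j\<in>UNIV. \<Sum>k\<in>UNIV. b$j * b$k * (X i $ j * X i $ k))"
      by (simp add: inner_vec_sum power2_eq_square sum_product mult_ac)
    also have "\<dots> = (\<Sum>j\<in>UNIV. \<Sum>k\<in>UNIV. b$j * b$k * (\<Sum>i<n. X i $ j * X i $ k))"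
      by (simp add: sum_distrib_left sum.swap[of _ "{..<n}"] )
    also have "\<dots> = (\<Sum>j\<in>UNIV. b$j * b$j * real n)"
      by (simp add: gram if_distrib sum.delta cong: if_cong)
    also have "\<dots> = real n * (b \<bullet> b)"
      by (simp add: inner_vec_sum sum_distrib_left mult_ac)
    finally show ?thesis .
  qed
  have lin: "(\<Sum>i<n. y i * (X i \<bullet> b)) = b \<bullet> zvec n X y"
    by (simp add: zvec_def inner_sum_right inner_commute)
  have "(\<Sum>i<n. (y i - X i \<bullet> b)\<^sup>2) = (\<Sum>i<n. (y i)\<^sup>2) - 2 * (\<Sum>i<n. y i * (X i \<bullet> b)) + (\<Sum>i<n. (X i \<bullet> b)\<^sup>2)"
    by (simp add: power2_diff sum.distrib sum_subtractf sum_distrib_left mult_ac)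
  then show ?thesis using sq lin by simp
qed

lemma sqrt_sq_abs: "(sqrt g)\<^sup>2 = \<bar>g\<bar>"
  by (simp add: power2_eq_square real_sqrt_mult[symmetric] real_sqrt_abs2)

lemma nd_sqrt_abs: "normal_density m (sqrt g) x = normal_density m (sqrt \<bar>g\<bar>) x"
  by (simp add: normal_density_def sqrt_sq_abs)

lemma nd_sqrt_pos: "v > 0 \<Longrightarrow> \<bar>s\<bar> = v \<Longrightarrow> normal_density m (sqrt s) x = 1 / sqrt (2 * pi * v) * exp (- (x - m)\<^sup>2 / (2 * v))"
  by (simp add: normal_density_def sqrt_sq_abs)

lemma lik_factor:
  fixes X :: "nat \<Rightarrow> real^'K"
  assumes n: "n > 0"
    and gram: "\<And>j k. (\<Sum>i<n. X i $ j * X i $ k) = (if j = k then real n else 0)"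
  shows "ss_lik n X (real n) y b s * slab_dens g b
     = Lc n (\<bar>s\<bar> * real n) (\<Sum>i<n. (y i)\<^sup>2) *
       (\<Prod>k\<in>UNIV. phi1 (real n) (\<bar>s\<bar> * real n) \<bar>g $ k\<bar> (zvec n X y $ k) (b $ k))"
proof (cases "s = 0")
  case True
  have "ss_lik n X (real n) y b s = 0"
    unfolding ss_lik_def True using n by (simp add: nd_zero_sigma)
  moreover have "Lc n (\<bar>s\<bar> * real n) (\<Sum>i<n. (y i)\<^sup>2) = 0"
    unfolding Lc_def True using n by simp
  ultimately show ?thesis by simp
next
  case False
  define v where "v = \<bar>s\<bar> * real n"
  have v: "v > 0" unfolding v_def using False n by simp
  define z where "z = zvec n X y"
  have "ss_lik n X (real n) y b s = (\<Prod>i<n. 1 / sqrt (2 * pi * v) * exp (- (y i - X i \<bullet> b)\<^sup>2 / (2 * v)))"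
    unfolding ss_lik_def
    by (intro prod.cong refl nd_sqrt_pos v) (simp add: v_def abs_mult)
  also have "\<dots> = (1 / sqrt (2 * pi * v)) ^ n * exp (- (\<Sum>i<n. (y i - X i \<bullet> b)\<^sup>2) / (2 * v))"
  proof -
    have "(\<Prod>i<n. 1 / sqrt (2 * pi * v) * exp (- (y i - X i \<bullet> b)\<^sup>2 / (2 * v)))
       = (\<Prod>i<n. 1 / sqrt (2 * pi * v)) * (\<Prod>i<n. exp (- (y i - X i \<bullet> b)\<^sup>2 / (2 * v)))"
      by (rule prod.distrib)
    also have "(\<Prod>i<n. exp (- (y i - X i \<bullet> b)\<^sup>2 / (2 * v))) = exp (\<Sum>i<n. - (y i - X i \<bullet> b)\<^sup>2 / (2 * v))"
      by (simp add: exp_sum)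
    also have "(\<Sum>i<n. - (y i - X i \<bullet> b)\<^sup>2 / (2 * v)) = - (\<Sum>i<n. (y i - X i \<bullet> b)\<^sup>2) / (2 * v)"
      by (simp add: sum_divide_distrib[symmetric] sum_negf)
    finally show ?thesis by simp
  qed
  also have "\<dots> = (1 / sqrt (2 * pi * v)) ^ n * (exp (- (\<Sum>i<n. (y i)\<^sup>2) / (2 * v)) *
        exp ((2 * (b \<bullet> z) - real n * (b \<bullet> b)) / (2 * v)))"
    unfolding quad_gram[OF gram] z_def
    by (simp add: exp_add[symmetric] add_divide_distrib[symmetric] diff_divide_distrib)
  also have "exp ((2 * (b \<bullet> z) - real n * (b \<bullet> b)) / (2 * v))
      = (\<Prod>k\<in>UNIV. exp ((2 * b$k * z$k - real n * (b$k)\<^sup>2) / (2 * v)))"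
    by (simp add: exp_sum[symmetric] inner_vec_sum sum_distrib_left sum_subtractf
        sum_divide_distrib[symmetric] power2_eq_square mult_ac)
  finally have L: "ss_lik n X (real n) y b s = Lc n v (\<Sum>i<n. (y i)\<^sup>2) *
       (\<Prod>k\<in>UNIV. exp ((2 * b$k * z$k - real n * (b$k)\<^sup>2) / (2 * v)))"
    by (simp add: Lc_def)
  have S: "slab_dens g b = (\<Prod>k\<in>UNIV. normal_density 0 (sqrt \<bar>g$k\<bar>) (b$k))"
    unfolding slab_dens_def by (simp add: nd_sqrt_abs[of 0 "g $ _"])
  show ?thesis
    unfolding L S v_def[symmetric] z_def[symmetric]
    by (simp add: phi1_def prod.distrib mult_ac)
qed

definition Wt :: "nat \<Rightarrow> (nat \<Rightarrow> real^'K) \<Rightarrow> (nat \<Rightarrow> real) \<Rightarrow> real^'K \<Rightarrow> real \<Rightarrow> real" where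
  "Wt n X y g s = Lc n (\<bar>s\<bar> * real n) (\<Sum>i<n. (y i)\<^sup>2) *
     (\<Prod>k\<in>UNIV. gk (real n) (\<bar>s\<bar> * real n) \<bar>g $ k\<bar> (zvec n X y $ k))"

lemma prod_if_one:
  fixes f h :: "'K::finite \<Rightarrow> real"
  shows "(\<Prod>j\<in>UNIV. if j = k then h j else f j) = h k * (\<Prod>j\<in>UNIV - {k}. f j)"
  by (subst prod.remove[of UNIV k]) (auto intro!: prod.cong)

lemma post_int:
  fixes X :: "nat \<Rightarrow> real^'K"
  assumes n: "n > 0"
    and gram: "\<And>j k. (\<Sum>i<n. X i $ j * X i $ k) = (if j = k then real n else 0)"
  shows "(\<integral>b. ss_lik n X (real n) y b s * slab_dens g b \<partial>lborel) = Wt n X y g s"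
    and "(\<integral>b. b $ k * ss_lik n X (real n) y b s * slab_dens g b \<partial>lborel)
          = gm (real n) (\<bar>s\<bar> * real n) \<bar>g $ k\<bar> (zvec n X y $ k) * Wt n X y g s"
proof -
  define v where "v = \<bar>s\<bar> * real n"
  define L where "L = Lc n v (\<Sum>i<n. (y i)\<^sup>2)"
  define f where "f j = phi1 (real n) v \<bar>g $ j\<bar> (zvec n X y $ j)" for j
  have LF: "ss_lik n X (real n) y b s * slab_dens g b = L * (\<Prod>j\<in>UNIV. f j (b $ j))" for b
    unfolding L_def f_def v_def by (rule lik_factor[OF n gram])
  have "(\<integral>b. ss_lik n X (real n) y b s * slab_dens g b \<partial>lborel) = Wt n X y g s \<and>
        (\<integral>b. b $ k * ss_lik n X (real n) y b s * slab_dens g b \<partial>lborel)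
          = gm (real n) v \<bar>g $ k\<bar> (zvec n X y $ k) * Wt n X y g s"
  proof (cases "s = 0")
    case True
    then have "L = 0" unfolding L_def v_def Lc_def using n by simp
    moreover have "Wt n X y g s = 0" unfolding Wt_def Lc_def True using n by simp
    ultimately show ?thesis by (simp add: LF mult.assoc)
  next
    case False
    then have v: "v > 0" unfolding v_def using n by simp
    have nn: "real n > 0" using n by simp
    have W: "Wt n X y g s = L * (\<Prod>j\<in>UNIV. gk (real n) v \<bar>g $ j\<bar> (zvec n X y $ j))"
      unfolding Wt_def L_def v_def ..
    have int: "\<And>j. integrable lborel (f j)" unfolding f_def by (rule gauss1d(1)[OF v abs_ge_zero nn])
    have I1: "(\<integral>b. (\<Prod>j\<in>UNIV. f j (b $ j)) \<partial>(lborel::(real^'K) measure))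
        = (\<Prod>j\<in>UNIV. gk (real n) v \<bar>g $ j\<bar> (zvec n X y $ j))"
      unfolding integral_lborel_prod_vec(2)[OF int] unfolding f_def by (simp add: gauss1d(2)[OF v abs_ge_zero nn])
    define f' where "f' j = (if j = k then (\<lambda>t. t * f j t) else f j)" for j
    have int': "\<And>j. integrable lborel (f' j)" unfolding f'_def f_def
      using gauss1d(1,3)[OF v abs_ge_zero nn] by auto
    have e': "b $ k * (\<Prod>j\<in>UNIV. f j (b $ j)) = (\<Prod>j\<in>UNIV. f' j (b $ j))" for b :: "real^'K"
    proof -
      have "(\<Prod>j\<in>UNIV. f' j (b $ j)) = (\<Prod>j\<in>UNIV. if j = k then b $ j * f j (b $ j) else f j (b $ j))"
        unfolding f'_def by (intro prod.cong) auto
      also have "\<dots> = b $ k * f k (b $ k) * (\<Prod>j\<in>UNIV - {k}. f j (b $ j))"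
        by (rule prod_if_one)
      also have "\<dots> = b $ k * (\<Prod>j\<in>UNIV. f j (b $ j))"
        by (simp add: prod.remove[of UNIV k])
      finally show ?thesis by simp
    qed
    have I2: "(\<integral>b. (\<Prod>j\<in>UNIV. f' j (b $ j)) \<partial>(lborel::(real^'K) measure))
        = gm (real n) v \<bar>g $ k\<bar> (zvec n X y $ k) * (\<Prod>j\<in>UNIV. gk (real n) v \<bar>g $ j\<bar> (zvec n X y $ j))"
    proof -
      have "(\<Prod>j\<in>UNIV. integral\<^sup>L lborel (f' j)) = (\<Prod>j\<in>UNIV. if j = k then
          gm (real n) v \<bar>g $ j\<bar> (zvec n X y $ j) * gk (real n) v \<bar>g $ j\<bar> (zvec n X y $ j)
          else gk (real n) v \<bar>g $ j\<bar> (zvec n X y $ j))"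
        unfolding f'_def f_def by (intro prod.cong) (auto simp: gauss1d(2,4)[OF v abs_ge_zero nn])
      also have "\<dots> = gm (real n) v \<bar>g $ k\<bar> (zvec n X y $ k) * (\<Prod>j\<in>UNIV. gk (real n) v \<bar>g $ j\<bar> (zvec n X y $ j))"
        by (subst prod_if_one) (simp add: prod.remove[of UNIV k])
      finally show ?thesis unfolding integral_lborel_prod_vec(2)[OF int'] .
    qed
    have a1: "(\<integral>b. ss_lik n X (real n) y b s * slab_dens g b \<partial>lborel) = L * (\<integral>b. (\<Prod>j\<in>UNIV. f j (b $ j)) \<partial>lborel)"
      by (simp add: LF)
    have a2: "(\<integral>b. b $ k * ss_lik n X (real n) y b s * slab_dens g b \<partial>lborel) = L * (\<integral>b. (\<Prod>j\<in>UNIV. f' j (b $ j)) \<partial>lborel)"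
      by (simp add: mult.assoc LF e'[symmetric] mult.left_commute[of "_ $ k"])
    show ?thesis unfolding a1 a2 I1 I2 W by simp
  qed
  then show "(\<integral>b. ss_lik n X (real n) y b s * slab_dens g b \<partial>lborel) = Wt n X y g s"
    and "(\<integral>b. b $ k * ss_lik n X (real n) y b s * slab_dens g b \<partial>lborel)
          = gm (real n) (\<bar>s\<bar> * real n) \<bar>g $ k\<bar> (zvec n X y $ k) * Wt n X y g s"
    unfolding v_def by auto
qed

lemma ratio_bounds:
  fixes pr :: "'g::second_countable_topology measure" and mu :: "real measure"
    and W h :: "'g \<Rightarrow> real \<Rightarrow> real"
  assumes pr: "prob_space pr" "sets pr = sets borel" and mu: "prob_space mu" "sets mu = sets borel"
    and Wm: "(\<lambda>(g, s). W g s) \<in> borel_measurable (borel \<Otimes>\<^sub>M borel)"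
    and hm: "(\<lambda>(g, s). h g s) \<in> borel_measurable (borel \<Otimes>\<^sub>M borel)"
    and W0: "\<And>g s. 0 \<le> W g s" and WB: "\<And>g s. W g s \<le> B"
    and h0: "\<And>g s. 0 \<le> h g s" and h1: "\<And>g s. h g s \<le> 1"
    and AEpos: "AE g in pr. AE s in mu. 0 < W g s \<and> \<rho> \<le> h g s"
  shows "0 < (\<integral>g. (\<integral>s. W g s \<partial>mu) \<partial>pr)"
    and "\<rho> * (\<integral>g. (\<integral>s. W g s \<partial>mu) \<partial>pr) \<le> (\<integral>g. (\<integral>s. h g s * W g s \<partial>mu) \<partial>pr)"
    and "(\<integral>g. (\<integral>s. h g s * W g s \<partial>mu) \<partial>pr) \<le> (\<integral>g. (\<integral>s. W g s \<partial>mu) \<partial>pr)"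
proof -
  interpret pr: prob_space pr by fact
  interpret mu: prob_space mu by fact
  have sp: "sets (pr \<Otimes>\<^sub>M mu) = sets (borel \<Otimes>\<^sub>M borel :: ('g \<times> real) measure)"
    using sets_pair_measure_cong[OF pr(2) mu(2)] by metis
  have Wm': "(\<lambda>(g, s). W g s) \<in> borel_measurable (pr \<Otimes>\<^sub>M mu)"
    using Wm measurable_cong_sets[OF sp refl] by blast
  have hm': "(\<lambda>(g, s). h g s) \<in> borel_measurable (pr \<Otimes>\<^sub>M mu)"
    using hm measurable_cong_sets[OF sp refl] by blast
  have hWm': "(\<lambda>(g, s). h g s * W g s) \<in> borel_measurable (pr \<Otimes>\<^sub>M mu)"
    using borel_measurable_times[OF hm' Wm'] by (simp add: split_beta')
  have spr: "space pr = UNIV" using sets_eq_imp_space_eq[OF pr(2)] by simp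
  have Wg: "W g \<in> borel_measurable mu" for g
    using measurable_Pair2[OF Wm', of g] spr by simp
  have hWg: "(\<lambda>s. h g s * W g s) \<in> borel_measurable mu" for g
    using measurable_Pair2[OF hWm', of g] spr by simp
  have IW: "(\<lambda>g. \<integral>s. W g s \<partial>mu) \<in> borel_measurable pr"
    using mu.borel_measurable_lebesgue_integral[OF Wm'] .
  have IhW: "(\<lambda>g. \<integral>s. h g s * W g s \<partial>mu) \<in> borel_measurable pr"
    using mu.borel_measurable_lebesgue_integral[of "\<lambda>g s. h g s * W g s", OF hWm'] .
  have hWB: "h g s * W g s \<le> B" for g s
  proof -
    have "h g s * W g s \<le> 1 * W g s" by (rule mult_right_mono[OF h1 W0])
    then show ?thesis using WB[of g s] by simp
  qed
  have hW0: "0 \<le> h g s * W g s" for g s using h0 W0 by simp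
  have iW: "integrable mu (W g)" for g
    by (rule mu.integrable_const_bound[where B=B]) (use W0 WB Wg in auto)
  have ihW: "integrable mu (\<lambda>s. h g s * W g s)" for g
  proof (rule mu.integrable_const_bound[where B=B])
    show "AE x in mu. norm (h g x * W g x) \<le> B"
    proof (intro AE_I2)
      fix x
      have "h g x * W g x \<le> 1 * W g x" by (rule mult_right_mono[OF h1 W0])
      then show "norm (h g x * W g x) \<le> B" using W0[of g x] h0[of g x] WB[of g x] by simp
    qed
  qed (rule hWg)
  have iIW: "integrable pr (\<lambda>g. \<integral>s. W g s \<partial>mu)"
  proof (rule pr.integrable_const_bound[where B=B])
    show "AE x in pr. norm (\<integral>s. W x s \<partial>mu) \<le> B"
      using W0 WB by (auto intro!: mu.integral_le_const iW simp: integral_nonneg)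
  qed (rule IW)
  have iIhW: "integrable pr (\<lambda>g. \<integral>s. h g s * W g s \<partial>mu)"
  proof (rule pr.integrable_const_bound[where B=B])
    show "AE x in pr. norm (\<integral>s. h x s * W x s \<partial>mu) \<le> B"
      using hW0 hWB
      by (auto intro!: mu.integral_le_const ihW integral_nonneg)
  qed (rule IhW)
  show "(\<integral>g. (\<integral>s. h g s * W g s \<partial>mu) \<partial>pr) \<le> (\<integral>g. (\<integral>s. W g s \<partial>mu) \<partial>pr)"
  proof (rule integral_mono[OF iIhW iIW])
    fix g show "(\<integral>s. h g s * W g s \<partial>mu) \<le> (\<integral>s. W g s \<partial>mu)"
    proof (rule integral_mono[OF ihW iW])
      fix s show "h g s * W g s \<le> W g s"
        using mult_right_mono[OF h1 W0, of g s g s] by simp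
    qed
  qed
  have "\<rho> * (\<integral>g. (\<integral>s. W g s \<partial>mu) \<partial>pr) = (\<integral>g. (\<integral>s. \<rho> * W g s \<partial>mu) \<partial>pr)"
    by simp
  also have "\<dots> \<le> (\<integral>g. (\<integral>s. h g s * W g s \<partial>mu) \<partial>pr)"
  proof (rule integral_mono_AE)
    show "integrable pr (\<lambda>g. \<integral>s. \<rho> * W g s \<partial>mu)"
      using integrable_mult_right[OF iIW, of \<rho>] by simp
    show "AE g in pr. (\<integral>s. \<rho> * W g s \<partial>mu) \<le> (\<integral>s. h g s * W g s \<partial>mu)"
      using AEpos
    proof eventually_elim
      case (elim g)
      show ?case
      proof (rule integral_mono_AE)
        show "integrable mu (\<lambda>s. \<rho> * W g s)" using iW by simp
        show "AE s in mu. \<rho> * W g s \<le> h g s * W g s"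
          using elim by eventually_elim (auto intro: mult_right_mono W0)
      qed (rule ihW)
    qed
  qed (rule iIhW)
  finally show "\<rho> * (\<integral>g. (\<integral>s. W g s \<partial>mu) \<partial>pr) \<le> (\<integral>g. (\<integral>s. h g s * W g s \<partial>mu) \<partial>pr)" .
  have D0: "0 \<le> (\<integral>g. (\<integral>s. W g s \<partial>mu) \<partial>pr)"
    using W0 by (auto intro!: integral_nonneg)
  moreover have "(\<integral>g. (\<integral>s. W g s \<partial>mu) \<partial>pr) \<noteq> 0"
  proof
    assume "(\<integral>g. (\<integral>s. W g s \<partial>mu) \<partial>pr) = 0"
    then have "AE g in pr. (\<integral>s. W g s \<partial>mu) = 0"
      using integral_nonneg_eq_0_iff_AE[OF iIW] W0 by (auto intro!: integral_nonneg)
    then have "AE g in pr. False"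
      using AEpos
    proof eventually_elim
      case (elim g)
      then have "AE s in mu. W g s = 0"
        using integral_nonneg_eq_0_iff_AE[OF iW] W0 by auto
      with elim(2) have "AE s in mu. False" by eventually_elim auto
      then show False by (simp add: mu.AE_False)
    qed
    then show False by (simp add: pr.AE_False)
  qed
  ultimately show "0 < (\<integral>g. (\<integral>s. W g s \<partial>mu) \<partial>pr)" by simp
qed

definition hk :: "'K::finite \<Rightarrow> real^'K \<Rightarrow> real \<Rightarrow> real" where
  "hk k g s = \<bar>g $ k\<bar> / (\<bar>g $ k\<bar> + \<bar>s\<bar>)"

lemma fst_nth_meas[measurable]: "(\<lambda>x::(real^'K) \<times> real. fst x $ k) \<in> borel_measurable (borel \<Otimes>\<^sub>M borel)"
proof -
  have "(\<lambda>x::real^'K. x $ k) \<in> borel_measurable borel" by (rule borel_measurable_nth)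
  from measurable_compose[OF measurable_fst this] show ?thesis .
qed

lemma Wt_meas: "(\<lambda>(g, s). Wt n X y g s) \<in> borel_measurable (borel \<Otimes>\<^sub>M borel)"
  unfolding Wt_def Lc_def gk_def gm_def gV_def by measurable

lemma hk_meas: "(\<lambda>(g, s). hk k g s) \<in> borel_measurable (borel \<Otimes>\<^sub>M borel)"
  unfolding hk_def by measurable

lemma pow_fact_le_exp:
  fixes x :: real assumes "0 \<le> x" shows "x ^ m / fact m \<le> exp x"
proof -
  have "sum (\<lambda>k. x ^ k /\<^sub>R fact k) {m} \<le> suminf (\<lambda>k. x ^ k /\<^sub>R fact k)"
    by (rule sum_le_suminf[OF summable_exp_generic]) (use assms in auto)
  then show ?thesis by (simp add: exp_def divide_inverse mult.commute)
qed

lemma Lc_bound: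
  fixes R v :: real assumes R: "R > 0" and v: "v > 0"
  shows "(1 / sqrt (2 * pi * v)) ^ n * exp (- R / (2 * v)) \<le> 1 + fact n / (pi * R) ^ n"
proof -
  define r where "r = 1 / sqrt (2 * pi * v)"
  have r: "r > 0" unfolding r_def using v by simp
  have r2: "r\<^sup>2 = 1 / (2 * pi * v)" unfolding r_def using v by (simp add: power_divide)
  define c where "c = pi * R"
  have c: "c > 0" unfolding c_def using R by simp
  have ex: "- R / (2 * v) = - (c * r\<^sup>2)" unfolding r2 c_def using v by (simp add: field_simps)
  show ?thesis
  proof (cases "r \<le> 1")
    case True
    have "r ^ n * exp (- (c * r\<^sup>2)) \<le> 1 * 1"
      by (intro mult_mono power_le_one) (use True r c in auto)
    moreover have "0 \<le> fact n / (pi * R) ^ n" using R by simp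
    ultimately show ?thesis unfolding r_def[symmetric] ex by simp
  next
    case False
    have "r ^ n \<le> (r\<^sup>2) ^ n"
      using False by (intro power_mono) (auto simp: power2_eq_square)
    also have "(r\<^sup>2) ^ n = (c * r\<^sup>2) ^ n / c ^ n" using c by (simp add: power_mult_distrib)
    also have "\<dots> \<le> (fact n * exp (c * r\<^sup>2)) / c ^ n"
    proof (intro divide_right_mono)
      have "(c * r\<^sup>2) ^ n / fact n \<le> exp (c * r\<^sup>2)" by (rule pow_fact_le_exp) (use c in simp)
      then show "(c * r\<^sup>2) ^ n \<le> fact n * exp (c * r\<^sup>2)" by (simp add: field_simps)
    qed (use c in simp)
    finally have "r ^ n * exp (- (c * r\<^sup>2)) \<le> (fact n * exp (c * r\<^sup>2)) / c ^ n * exp (- (c * r\<^sup>2))"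
      by (rule mult_right_mono) simp
    also have "\<dots> = fact n / c ^ n" by (simp add: exp_minus field_simps)
    finally show ?thesis unfolding r_def[symmetric] ex c_def by simp
  qed
qed

lemma gk_nonneg: "0 \<le> nn \<Longrightarrow> 0 \<le> v \<Longrightarrow> 0 \<le> G \<Longrightarrow> 0 \<le> gk nn v G z"
  unfolding gk_def gV_def by (intro mult_nonneg_nonneg) (auto intro!: divide_nonneg_nonneg)

lemma gk_bounds:
  fixes nn v G z :: real assumes nn: "nn > 0" and v: "v > 0" and G: "G \<ge> 0"
  shows "0 \<le> gk nn v G z" and "gk nn v G z \<le> exp (z\<^sup>2 / (2 * v * nn))"
    and "G > 0 \<Longrightarrow> gk nn v G z > 0"
proof -
  show "0 \<le> gk nn v G z" using nn v G by (intro gk_nonneg) auto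
  show "G > 0 \<Longrightarrow> gk nn v G z > 0" unfolding gk_def gV_def using nn v
    by (simp add: add_pos_pos)
  show "gk nn v G z \<le> exp (z\<^sup>2 / (2 * v * nn))"
  proof (cases "G = 0")
    case True then show ?thesis by (simp add: gk_def gV_def)
  next
    case False
    then have Gp: "G > 0" using G by simp
    have d: "nn * G + v > 0" using nn v Gp by (simp add: add_pos_pos)
    have e1: "(gm nn v G z)\<^sup>2 / (2 * gV nn v G) = z\<^sup>2 * (G / (nn * G + v)) / (2 * v)"
    proof -
      define A where "A = G / (nn * G + v)"
      have A: "A > 0" unfolding A_def using d Gp by simp
      have "gm nn v G z = z * A" "gV nn v G = v * A" unfolding A_def gm_def gV_def by simp_all
      then show ?thesis unfolding A_def[symmetric] using A v by (simp add: power2_eq_square field_simps)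
    qed
    have "G / (nn * G + v) \<le> 1 / nn" using nn v Gp d by (simp add: field_simps)
    then have "z\<^sup>2 * (G / (nn * G + v)) / (2 * v) \<le> z\<^sup>2 * (1 / nn) / (2 * v)"
      using v by (intro divide_right_mono mult_left_mono) auto
    then have x1: "exp ((gm nn v G z)\<^sup>2 / (2 * gV nn v G)) \<le> exp (z\<^sup>2 / (2 * v * nn))"
      unfolding e1 by (simp add: mult.commute)
    have "gV nn v G / G = v / (nn * G + v)" unfolding gV_def using Gp by simp
    also have "\<dots> \<le> 1" using d nn Gp by simp
    finally have "gV nn v G / G \<le> 1" .
    then have x2: "sqrt (gV nn v G / G) \<le> 1" by simp
    have x3: "0 \<le> sqrt (gV nn v G / G)" unfolding gV_def using d Gp v by simp
    show ?thesis unfolding gk_def using mult_mono[OF x1 x2 _ x3] by simp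
  qed
qed

lemma Wt_nonneg: "0 \<le> Wt n X y g s"
  unfolding Wt_def Lc_def
  by (intro mult_nonneg_nonneg prod_nonneg gk_nonneg ballI) auto

lemma Wt_pos: "n > 0 \<Longrightarrow> s \<noteq> 0 \<Longrightarrow> (\<And>k. g $ k \<noteq> 0) \<Longrightarrow> 0 < Wt n X y g s"
  unfolding Wt_def Lc_def
  by (intro mult_pos_pos prod_pos gk_bounds(3)) auto

lemma Wt_bound:
  fixes X :: "nat \<Rightarrow> real^'K"
  assumes n: "n > 0" and R: "(\<Sum>i<n. (y i)\<^sup>2) - (\<Sum>k\<in>UNIV. (zvec n X y $ k)\<^sup>2) / real n > 0"
  shows "Wt n X y g s \<le> 1 + fact n / (pi * ((\<Sum>i<n. (y i)\<^sup>2) - (\<Sum>k\<in>UNIV. (zvec n X y $ k)\<^sup>2) / real n)) ^ n"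
proof (cases "s = 0")
  case True
  have "0 \<le> fact n / (pi * ((\<Sum>i<n. (y i)\<^sup>2) - (\<Sum>k\<in>UNIV. (zvec n X y $ k)\<^sup>2) / real n)) ^ n"
    using R by simp
  then show ?thesis using True n by (simp add: Wt_def Lc_def zero_power)
next
  case False
  define v where "v = \<bar>s\<bar> * real n"
  have v: "v > 0" unfolding v_def using False n by simp
  define Y2 where "Y2 = (\<Sum>i<n. (y i)\<^sup>2)"
  define R where "R = Y2 - (\<Sum>k\<in>UNIV. (zvec n X y $ k)\<^sup>2) / real n"
  have Rp: "R > 0" using assms unfolding R_def Y2_def by simp
  have "Wt n X y g s = (1 / sqrt (2 * pi * v)) ^ n * exp (- Y2 / (2 * v)) *
      (\<Prod>k\<in>UNIV. gk (real n) v \<bar>g $ k\<bar> (zvec n X y $ k))"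
    unfolding Wt_def Lc_def v_def Y2_def ..
  also have "\<dots> \<le> (1 / sqrt (2 * pi * v)) ^ n * exp (- Y2 / (2 * v)) *
      (\<Prod>k\<in>UNIV. exp ((zvec n X y $ k)\<^sup>2 / (2 * v * real n)))"
    by (intro mult_left_mono prod_mono conjI gk_bounds) (use v n in auto)
  also have "(\<Prod>k\<in>UNIV. exp ((zvec n X y $ k)\<^sup>2 / (2 * v * real n)))
      = exp ((\<Sum>k\<in>UNIV. (zvec n X y $ k)\<^sup>2) / real n / (2 * v))"
    by (simp add: exp_sum[symmetric] sum_divide_distrib[symmetric] field_simps)
  also have "(1 / sqrt (2 * pi * v)) ^ n * exp (- Y2 / (2 * v)) * \<dots> = (1 / sqrt (2 * pi * v)) ^ n * exp (- R / (2 * v))"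
    unfolding R_def by (simp add: mult.assoc exp_add[symmetric] diff_divide_distrib)
  also have "\<dots> \<le> 1 + fact n / (pi * R) ^ n" by (rule Lc_bound[OF Rp v])
  finally show ?thesis unfolding R_def Y2_def .
qed

lemma hk_bounds: "0 \<le> hk k g s" "hk k g s \<le> 1"
  unfolding hk_def by (auto simp: divide_le_eq_1)

lemma hk_lower:
  assumes "\<eta>0 > 0" "g $ k \<ge> \<eta>0" "0 < s" "s \<le> s0"
  shows "\<eta>0 / (\<eta>0 + s0) \<le> hk k g s"
proof -
  have "\<eta>0 * s \<le> g $ k * s0" using assms by (intro mult_mono) auto
  then show ?thesis unfolding hk_def using assms by (simp add: field_simps)
qed

lemma post_mean_repr:
  fixes X :: "nat \<Rightarrow> real^'K" and pr :: "(real^'K) measure" and mu :: "real measure"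
  assumes n: "n > 0"
    and gram: "\<And>j k. (\<Sum>i<n. X i $ j * X i $ k) = (if j = k then real n else 0)"
    and pr: "prob_space pr" "sets pr = sets borel" and mu: "prob_space mu" "sets mu = sets borel"
    and AEg: "AE g in pr. \<forall>k. \<eta>0 \<le> g $ k" and AEs: "AE s in mu. 0 < s \<and> s \<le> s0"
    and eta: "\<eta>0 > 0"
    and R: "(\<Sum>i<n. (y i)\<^sup>2) - (\<Sum>k\<in>UNIV. (zvec n X y $ k)\<^sup>2) / real n > 0"
  shows "\<exists>H. \<eta>0 / (\<eta>0 + s0) \<le> H \<and> H \<le> 1 \<and>
     ss_post_mean n X (real n) pr mu y $ k = zvec n X y $ k / real n * H"
proof -
  define W where "W = Wt n X y"
  define D where "D = (\<integral>g. (\<integral>s. W g s \<partial>mu) \<partial>pr)"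
  define N where "N = (\<integral>g. (\<integral>s. hk k g s * W g s \<partial>mu) \<partial>pr)"
  define \<rho> where "\<rho> = \<eta>0 / (\<eta>0 + s0)"
  have gm: "gm (real n) (\<bar>s\<bar> * real n) \<bar>g $ k\<bar> (zvec n X y $ k) = zvec n X y $ k / real n * hk k g s" for g s
    unfolding gm_def hk_def using n by (simp add: field_simps)
  have num: "(\<integral>g. (\<integral>s. (\<integral>b. b $ k * ss_lik n X (real n) y b s * slab_dens g b \<partial>lborel) \<partial>mu) \<partial>pr)
      = zvec n X y $ k / real n * N"
    unfolding N_def W_def post_int(2)[OF n gram] gm by (simp add: mult.assoc)
  have den: "(\<integral>g. (\<integral>s. (\<integral>b. ss_lik n X (real n) y b s * slab_dens g b \<partial>lborel) \<partial>mu) \<partial>pr) = D"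
    unfolding D_def W_def post_int(1)[OF n gram] ..
  have AEpos: "AE g in pr. AE s in mu. 0 < W g s \<and> \<rho> \<le> hk k g s"
    using AEg
  proof eventually_elim
    case (elim g)
    show ?case using AEs
    proof eventually_elim
      case (elim s)
      have "\<And>j. g $ j \<noteq> 0" using \<open>\<forall>k. \<eta>0 \<le> g $ k\<close> eta by (metis not_le order.refl less_le_trans)
      then have "0 < W g s" unfolding W_def using elim by (intro Wt_pos[OF n]) auto
      moreover have "\<rho> \<le> hk k g s" unfolding \<rho>_def
        using elim \<open>\<forall>k. \<eta>0 \<le> g $ k\<close> by (intro hk_lower[OF eta]) auto
      ultimately show ?case by simp
    qed
  qed
  have Wm: "(\<lambda>(g, s). W g s) \<in> borel_measurable (borel \<Otimes>\<^sub>M borel)"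
    unfolding W_def by (rule Wt_meas)
  have W0: "\<And>g s. 0 \<le> W g s" unfolding W_def by (rule Wt_nonneg)
  have WB: "\<And>g s. W g s \<le> 1 + fact n / (pi * ((\<Sum>i<n. (y i)\<^sup>2) - (\<Sum>k\<in>UNIV. (zvec n X y $ k)\<^sup>2) / real n)) ^ n"
    unfolding W_def by (rule Wt_bound[OF n R])
  have h0: "\<And>g s. 0 \<le> hk k g s" and h1: "\<And>g s. hk k g s \<le> 1" by (rule hk_bounds)+
  note rb = ratio_bounds[OF pr mu Wm hk_meas W0 WB h0 h1 AEpos]
  have Dp: "D > 0" using rb(1) unfolding D_def .
  have lo: "\<rho> * D \<le> N" using rb(2) unfolding D_def N_def .
  have hi: "N \<le> D" using rb(3) unfolding D_def N_def .
  show ?thesis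
  proof (intro exI conjI)
    show "\<eta>0 / (\<eta>0 + s0) \<le> N / D" using lo Dp unfolding \<rho>_def[symmetric] by (simp add: field_simps)
    show "N / D \<le> 1" using hi Dp by simp
    show "ss_post_mean n X (real n) pr mu y $ k = zvec n X y $ k / real n * (N / D)"
      unfolding ss_post_mean_def vec_lambda_beta num den by simp
  qed
qed

lemma mat_delta_sum: "(\<Sum>k\<in>(UNIV::'n::finite set). (if i = k then a else 0) * (f k :: real)) = a * f i"
proof -
  have "(\<Sum>k\<in>UNIV. (if i = k then a else 0) * f k) = (\<Sum>k\<in>UNIV. if i = k then a * f k else 0)"
    by (intro sum.cong) auto
  also have "\<dots> = a * f i" by (simp add: sum.delta)
  finally show ?thesis .
qed

lemma mat_mult_mat: "(mat a :: real^'n^'n) ** mat b = mat (a * b)"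
  unfolding matrix_matrix_mult_def by (simp add: vec_eq_iff mat_def mat_delta_sum)

lemma mat_mult_vec: "(mat a :: real^'n^'n) *v x = a *\<^sub>R x"
  unfolding matrix_vector_mult_def by (simp add: vec_eq_iff mat_def mat_delta_sum)

lemma matrix_inv_mat:
  assumes "a \<noteq> 0"
  shows "matrix_inv (mat a :: real^'n^'n) = mat (1 / a)"
proof -
  let ?B = "mat (1 / a) :: real^'n^'n"
  have B: "mat a ** ?B = mat 1 \<and> ?B ** mat a = mat 1"
    using assms by (simp add: mat_mult_mat)
  have uniq: "A' = ?B" if "mat a ** A' = mat 1 \<and> A' ** mat a = mat 1" for A' :: "real^'n^'n"
  proof -
    have "A' = A' ** (mat a ** ?B)" using B by simp
    also have "\<dots> = (A' ** mat a) ** ?B" by (simp add: matrix_mul_assoc)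
    also have "\<dots> = ?B" using that by simp
    finally show ?thesis .
  qed
  show ?thesis unfolding matrix_inv_def
    by (rule uniq, rule someI[of _ ?B], rule B)
qed

lemma design_gram_eq:
  assumes gram: "\<And>j k. (\<Sum>i<n. X i $ j * X i $ k) = (if j = k then real n else 0)"
  shows "design_gram n X = mat (real n)"
  using gram by (simp add: design_gram_def mat_def vec_eq_iff)

lemma ols_eq:
  assumes n: "n > 0" and gram: "\<And>j k. (\<Sum>i<n. X i $ j * X i $ k) = (if j = k then real n else 0)"
  shows "ols n X Y = (1 / real n) *\<^sub>R zvec n X Y"
  unfolding ols_def design_gram_eq[OF gram] using n
  by (simp add: matrix_inv_mat mat_mult_vec zvec_def)

lemma sigma_hat_eq:
  fixes X :: "nat \<Rightarrow> real^'K"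
  assumes n: "n > 0" and gram: "\<And>j k. (\<Sum>i<n. X i $ j * X i $ k) = (if j = k then real n else 0)"
  shows "sigma_hat_sq n X Y = ((\<Sum>i<n. (Y i)\<^sup>2) - (\<Sum>k\<in>UNIV. (zvec n X Y $ k)\<^sup>2) / real n) / (real n - real CARD('K))"
proof -
  let ?z = "zvec n X Y"
  have zz: "?z \<bullet> ?z = (\<Sum>k\<in>UNIV. (?z $ k)\<^sup>2)" by (simp add: inner_vec_sum power2_eq_square)
  have "(\<Sum>i<n. (Y i - X i \<bullet> ols n X Y)\<^sup>2) = (\<Sum>i<n. (Y i)\<^sup>2) - (?z \<bullet> ?z) / real n"
    unfolding quad_gram[OF gram] ols_eq[OF n gram] using n
    by (simp add: inner_commute power2_eq_square field_simps)
  then show ?thesis unfolding sigma_hat_sq_def zz by simp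
qed

lemma rss_eq:
  fixes X :: "nat \<Rightarrow> real^'K"
  assumes n: "n > 0" and gram: "\<And>j k. (\<Sum>i<n. X i $ j * X i $ k) = (if j = k then real n else 0)"
  shows "(\<Sum>i<n. (Y i)\<^sup>2) - (\<Sum>k\<in>UNIV. (zvec n X Y $ k)\<^sup>2) / real n
      = (\<Sum>i<n. (Y i - X i \<bullet> ((1 / real n) *\<^sub>R zvec n X Y))\<^sup>2)"
proof -
  let ?z = "zvec n X Y"
  have zz: "?z \<bullet> ?z = (\<Sum>k\<in>UNIV. (?z $ k)\<^sup>2)" by (simp add: inner_vec_sum power2_eq_square)
  show ?thesis unfolding quad_gram[OF gram] zz[symmetric] using n
    by (simp add: inner_commute power2_eq_square field_simps)
qed

lemma zvec_model:
  fixes X :: "nat \<Rightarrow> real^'K"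
  assumes gram: "\<And>j k. (\<Sum>i<n. X i $ j * X i $ k) = (if j = k then real n else 0)"
  shows "zvec n X (\<lambda>i. X i \<bullet> \<beta>0 + e i) = real n *\<^sub>R \<beta>0 + zvec n X e"
proof -
  have "(zvec n X (\<lambda>i. X i \<bullet> \<beta>0)) $ k = real n * \<beta>0 $ k" for k
  proof -
    have "(zvec n X (\<lambda>i. X i \<bullet> \<beta>0)) $ k = (\<Sum>i<n. (\<Sum>j\<in>UNIV. X i $ j * \<beta>0 $ j) * X i $ k)"
      by (simp add: zvec_def inner_vec_sum)
    also have "\<dots> = (\<Sum>j\<in>UNIV. \<beta>0 $ j * (\<Sum>i<n. X i $ j * X i $ k))"
      by (simp add: sum_distrib_left sum_distrib_right sum.swap[of _ "{..<n}"] mult_ac)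
    also have "\<dots> = real n * \<beta>0 $ k"
      by (simp add: gram if_distrib sum.delta cong: if_cong)
    finally show ?thesis .
  qed
  then show ?thesis
    by (simp add: vec_eq_iff zvec_def scaleR_add_left sum.distrib algebra_simps)
qed

lemma rss_model:
  fixes X :: "nat \<Rightarrow> real^'K"
  assumes n: "n > 0" and gram: "\<And>j k. (\<Sum>i<n. X i $ j * X i $ k) = (if j = k then real n else 0)"
  shows "(\<Sum>i<n. (X i \<bullet> \<beta>0 + e i)\<^sup>2) - (\<Sum>k\<in>UNIV. (zvec n X (\<lambda>i. X i \<bullet> \<beta>0 + e i) $ k)\<^sup>2) / real n
      = (\<Sum>i<n. (e i)\<^sup>2) - (\<Sum>k\<in>UNIV. (zvec n X e $ k)\<^sup>2) / real n"
proof -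
  have "\<And>i. X i \<bullet> \<beta>0 + e i - X i \<bullet> ((1 / real n) *\<^sub>R zvec n X (\<lambda>i. X i \<bullet> \<beta>0 + e i))
     = e i - X i \<bullet> ((1 / real n) *\<^sub>R zvec n X e)"
    unfolding zvec_model[OF gram] using n by (simp add: inner_add_right scaleR_add_right)
  then show ?thesis unfolding rss_eq[OF n gram] by (intro sum.cong refl) presburger
qed

lemma pm_model:
  fixes X :: "nat \<Rightarrow> real^'K" and pr :: "(real^'K) measure" and mu :: "real measure"
  assumes nK: "n > CARD('K)"
    and gram: "\<And>j k. (\<Sum>i<n. X i $ j * X i $ k) = (if j = k then real n else 0)"
    and pr: "prob_space pr" "sets pr = sets borel" and mu: "prob_space mu" "sets mu = sets borel"
    and AEg: "AE g in pr. \<forall>k. \<eta>0 \<le> g $ k" and AEs: "AE s in mu. 0 < s \<and> s \<le> s0"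
    and eta: "\<eta>0 > 0"
    and sh: "sigma_hat_sq n X (\<lambda>i. X i \<bullet> \<beta>0 + e i) > 0"
  shows "\<exists>H. \<eta>0 / (\<eta>0 + s0) \<le> H \<and> H \<le> 1 \<and>
     ss_post_mean n X (real n) pr mu (rescaled_resp n X (\<lambda>i. X i \<bullet> \<beta>0 + e i)) $ k
       = sqrt (real n) / sqrt (sigma_hat_sq n X (\<lambda>i. X i \<bullet> \<beta>0 + e i)) * (\<beta>0 $ k + zvec n X e $ k / real n) * H"
proof -
  have n: "n > 0" using nK by simp
  define Y where "Y = (\<lambda>i. X i \<bullet> \<beta>0 + e i)"
  define s where "s = sigma_hat_sq n X Y"
  have sp: "s > 0" using sh unfolding s_def Y_def .
  define c where "c = sqrt (real n) / sqrt s"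
  have ys: "rescaled_resp n X Y = (\<lambda>i. c * Y i)"
    unfolding rescaled_resp_def c_def s_def by (rule ext) simp
  have zc: "zvec n X (\<lambda>i. c * Y i) = c *\<^sub>R zvec n X Y"
    by (simp add: zvec_def scaleR_sum_right)
  define RSS where "RSS = (\<Sum>i<n. (Y i)\<^sup>2) - (\<Sum>k\<in>UNIV. (zvec n X Y $ k)\<^sup>2) / real n"
  have nK': "real n - real CARD('K) > 0" using nK by simp
  have sR: "s = RSS / (real n - real CARD('K))" unfolding s_def RSS_def by (rule sigma_hat_eq[OF n gram])
  have c2: "c\<^sup>2 = real n / s" unfolding c_def using sp by (simp add: power_divide)
  have R: "(\<Sum>i<n. (c * Y i)\<^sup>2) - (\<Sum>k\<in>UNIV. (zvec n X (\<lambda>i. c * Y i) $ k)\<^sup>2) / real n = c\<^sup>2 * RSS"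
    unfolding zc RSS_def by (simp add: power_mult_distrib sum_distrib_left[symmetric] right_diff_distrib)
  have "c\<^sup>2 * RSS = real n * (real n - real CARD('K))"
  proof -
    have r: "RSS = s * (real n - real CARD('K))" using sR nK' by (simp add: field_simps)
    show ?thesis unfolding c2 r using sp by simp
  qed
  then have Rp: "(\<Sum>i<n. (c * Y i)\<^sup>2) - (\<Sum>k\<in>UNIV. (zvec n X (\<lambda>i. c * Y i) $ k)\<^sup>2) / real n > 0"
    unfolding R using n nK' by simp
  obtain H where H: "\<eta>0 / (\<eta>0 + s0) \<le> H" "H \<le> 1"
    "ss_post_mean n X (real n) pr mu (\<lambda>i. c * Y i) $ k = zvec n X (\<lambda>i. c * Y i) $ k / real n * H"
    using post_mean_repr[OF n gram pr mu AEg AEs eta Rp, of k] by blast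
  have "zvec n X (\<lambda>i. c * Y i) $ k / real n = c * (\<beta>0 $ k + zvec n X e $ k / real n)"
  proof -
    have a: "zvec n X (\<lambda>i. c * Y i) $ k = c * zvec n X Y $ k" using zc by simp
    have b: "zvec n X Y = real n *\<^sub>R \<beta>0 + zvec n X e" unfolding Y_def by (rule zvec_model[OF gram])
    show ?thesis unfolding a b using n by (simp add: field_simps)
  qed
  then have "ss_post_mean n X (real n) pr mu (rescaled_resp n X Y) $ k = c * (\<beta>0 $ k + zvec n X e $ k / real n) * H"
    using H(3) unfolding ys by simp
  then show ?thesis using H(1,2) unfolding c_def s_def Y_def by blast
qed

lemma sel_correct:
  fixes X :: "nat \<Rightarrow> real^'K" and pr :: "(real^'K) measure" and mu :: "real measure"
  assumes nK: "n > CARD('K)"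
    and gram: "\<And>j k. (\<Sum>i<n. X i $ j * X i $ k) = (if j = k then real n else 0)"
    and pr: "prob_space pr" "sets pr = sets borel" and mu: "prob_space mu" "sets mu = sets borel"
    and AEg: "AE g in pr. \<forall>k. \<eta>0 \<le> g $ k" and AEs: "AE s in mu. 0 < s \<and> s \<le> s0"
    and eta: "\<eta>0 > 0" and s0: "s0 > 0" and sig: "\<sigma>2 > 0"
    and Sb: "\<And>k. \<bar>zvec n X e $ k\<bar> \<le> T * sqrt (real n)"
    and shb: "\<sigma>2 / 2 \<le> sigma_hat_sq n X (\<lambda>i. X i \<bullet> \<beta>0 + e i)"
             "sigma_hat_sq n X (\<lambda>i. X i \<bullet> \<beta>0 + e i) \<le> 3 * \<sigma>2 / 2"
    and big: "\<And>k. \<beta>0 $ k \<noteq> 0 \<Longrightarrow> T / sqrt (real n) \<le> \<bar>\<beta>0 $ k\<bar> / 2 \<and>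
                 Cn \<le> \<eta>0 / (\<eta>0 + s0) * sqrt (real n) * (\<bar>\<beta>0 $ k\<bar> / 2) / sqrt (3 * \<sigma>2 / 2)"
    and small: "T / sqrt (\<sigma>2 / 2) < Cn"
  shows "card {k. sel_vector n X (real n) pr mu (\<lambda>i. X i \<bullet> \<beta>0 + e i) Cn $ k \<noteq> 0}
       = card {k. \<beta>0 $ k \<noteq> 0}"
proof -
  define sh where "sh = sigma_hat_sq n X (\<lambda>i. X i \<bullet> \<beta>0 + e i)"
  define a where "a = sqrt (real n)"
  have n: "n > 0" using nK by simp
  have a: "a > 0" unfolding a_def using n by simp
  have a2: "a * a = real n" unfolding a_def by simp
  have shp: "sh > 0" unfolding sh_def using shb sig by linarith
  define \<rho> where "\<rho> = \<eta>0 / (\<eta>0 + s0)"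
  have \<rho>: "\<rho> > 0" unfolding \<rho>_def using eta s0 by simp
  have Sk: "\<bar>zvec n X e $ k / real n\<bar> \<le> T / a" for k
  proof -
    have "\<bar>zvec n X e $ k / real n\<bar> = \<bar>zvec n X e $ k\<bar> / (a * a)" unfolding a2 by simp
    also have "\<dots> \<le> (T * a) / (a * a)" using Sb[of k] a unfolding a_def[symmetric]
      by (intro divide_right_mono) auto
    also have "\<dots> = T / a" using a by simp
    finally show ?thesis .
  qed
  have T0: "T \<ge> 0" using Sb[of undefined] n by (metis abs_ge_zero order.trans zero_le_mult_iff real_sqrt_gt_zero of_nat_0_less_iff not_le)
  have iff: "sel_vector n X (real n) pr mu (\<lambda>i. X i \<bullet> \<beta>0 + e i) Cn $ k \<noteq> 0 \<longleftrightarrow> \<beta>0 $ k \<noteq> 0" for k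
  proof -
    obtain H where H: "\<rho> \<le> H" "H \<le> 1"
      "ss_post_mean n X (real n) pr mu (rescaled_resp n X (\<lambda>i. X i \<bullet> \<beta>0 + e i)) $ k
        = a / sqrt sh * (\<beta>0 $ k + zvec n X e $ k / real n) * H"
      using pm_model[OF nK gram pr mu AEg AEs eta shp[unfolded sh_def], of k]
      unfolding \<rho>_def[symmetric] a_def[symmetric] sh_def[symmetric] by blast
    define pm where "pm = ss_post_mean n X (real n) pr mu (rescaled_resp n X (\<lambda>i. X i \<bullet> \<beta>0 + e i)) $ k"
    have sel: "sel_vector n X (real n) pr mu (\<lambda>i. X i \<bullet> \<beta>0 + e i) Cn $ k \<noteq> 0 \<longleftrightarrow> \<bar>pm\<bar> \<ge> Cn"
      unfolding sel_vector_def pm_def by simp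
    have Hp: "H > 0" using H \<rho> by simp
    have sqsh: "sqrt sh > 0" using shp by simp
    have apm: "\<bar>pm\<bar> = a / sqrt sh * \<bar>\<beta>0 $ k + zvec n X e $ k / real n\<bar> * H"
      unfolding pm_def H(3) using a sqsh Hp by (simp add: abs_mult)
    show ?thesis
    proof (cases "\<beta>0 $ k = 0")
      case True
      have "\<bar>pm\<bar> \<le> a / sqrt (\<sigma>2 / 2) * (T / a) * 1"
        unfolding apm True
        using Sk[of k] H(2) Hp a sqsh shb sig T0
        by (intro mult_mono divide_left_mono real_sqrt_le_mono) (auto simp: sh_def)
      also have "\<dots> = T / sqrt (\<sigma>2 / 2)" using a by simp
      finally have "\<bar>pm\<bar> < Cn" using small by simp
      then show ?thesis using sel True by simp
    next
      case False
      note b = big[OF False]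
      have l1: "\<bar>\<beta>0 $ k\<bar> / 2 \<le> \<bar>\<beta>0 $ k + zvec n X e $ k / real n\<bar>"
        using Sk[of k] b unfolding a_def by linarith
      have "Cn \<le> \<rho> * a * (\<bar>\<beta>0 $ k\<bar> / 2) / sqrt (3 * \<sigma>2 / 2)"
        using b unfolding \<rho>_def a_def by simp
      also have "\<dots> = a / sqrt (3 * \<sigma>2 / 2) * (\<bar>\<beta>0 $ k\<bar> / 2) * \<rho>" by (simp add: field_simps)
      also have "\<dots> \<le> a / sqrt sh * \<bar>\<beta>0 $ k + zvec n X e $ k / real n\<bar> * H"
        using l1 H(1) \<rho> a sqsh shb sig
        by (intro mult_mono divide_left_mono real_sqrt_le_mono) (auto simp: sh_def)
      finally have "Cn \<le> \<bar>pm\<bar>" unfolding apm .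
      then show ?thesis using sel False by simp
    qed
  qed
  show ?thesis using iff by (intro arg_cong[where f=card]) auto
qed

lemma (in prob_space) integrable_prod_sq:
  fixes Z W :: "'a \<Rightarrow> real"
  assumes [measurable]: "Z \<in> borel_measurable M" "W \<in> borel_measurable M"
    and "integrable M (\<lambda>\<omega>. (Z \<omega>)\<^sup>2)" "integrable M (\<lambda>\<omega>. (W \<omega>)\<^sup>2)"
  shows "integrable M (\<lambda>\<omega>. Z \<omega> * W \<omega>)"
proof (rule Bochner_Integration.integrable_bound[of _ "\<lambda>\<omega>. (Z \<omega>)\<^sup>2 + (W \<omega>)\<^sup>2"])
  show "integrable M (\<lambda>\<omega>. (Z \<omega>)\<^sup>2 + (W \<omega>)\<^sup>2)" using assms by simp
  show "(\<lambda>\<omega>. Z \<omega> * W \<omega>) \<in> borel_measurable M" by measurable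
  show "AE x in M. norm (Z x * W x) \<le> norm ((Z x)\<^sup>2 + (W x)\<^sup>2)"
  proof (intro AE_I2)
    fix x
    have "2 * \<bar>Z x\<bar> * \<bar>W x\<bar> \<le> (Z x)\<^sup>2 + (W x)\<^sup>2"
      using sum_squares_bound[of "\<bar>Z x\<bar>" "\<bar>W x\<bar>"] by simp
    moreover have "\<bar>Z x\<bar> * \<bar>W x\<bar> \<le> 2 * \<bar>Z x\<bar> * \<bar>W x\<bar>" by simp
    moreover have "0 \<le> (Z x)\<^sup>2 + (W x)\<^sup>2" by simp
    ultimately show "norm (Z x * W x) \<le> norm ((Z x)\<^sup>2 + (W x)\<^sup>2)"
      unfolding real_norm_def abs_mult by linarith
  qed
qed

lemma (in prob_space) sq_sum_orth:
  fixes Z :: "nat \<Rightarrow> 'a \<Rightarrow> real"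
  assumes fin: "finite I"
    and meas: "\<And>i. Z i \<in> borel_measurable M"
    and sq: "\<And>i. integrable M (\<lambda>\<omega>. (Z i \<omega>)\<^sup>2)"
    and orth: "\<And>i j. i \<noteq> j \<Longrightarrow> expectation (\<lambda>\<omega>. Z i \<omega> * Z j \<omega>) = 0"
  shows "integrable M (\<lambda>\<omega>. (\<Sum>i\<in>I. Z i \<omega>)\<^sup>2)"
    and "expectation (\<lambda>\<omega>. (\<Sum>i\<in>I. Z i \<omega>)\<^sup>2) = (\<Sum>i\<in>I. expectation (\<lambda>\<omega>. (Z i \<omega>)\<^sup>2))"
proof -
  have ip: "integrable M (\<lambda>\<omega>. Z i \<omega> * Z j \<omega>)" for i j
    by (rule integrable_prod_sq[OF meas meas sq sq])
  have e: "(\<lambda>\<omega>. (\<Sum>i\<in>I. Z i \<omega>)\<^sup>2) = (\<lambda>\<omega>. \<Sum>i\<in>I. \<Sum>j\<in>I. Z i \<omega> * Z j \<omega>)"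
    by (simp add: power2_eq_square sum_product)
  show "integrable M (\<lambda>\<omega>. (\<Sum>i\<in>I. Z i \<omega>)\<^sup>2)" unfolding e using ip by simp
  have "expectation (\<lambda>\<omega>. (\<Sum>i\<in>I. Z i \<omega>)\<^sup>2) = (\<Sum>i\<in>I. \<Sum>j\<in>I. expectation (\<lambda>\<omega>. Z i \<omega> * Z j \<omega>))"
    unfolding e using ip by (simp add: Bochner_Integration.integral_sum)
  also have "\<dots> = (\<Sum>i\<in>I. \<Sum>j\<in>I. if i = j then expectation (\<lambda>\<omega>. (Z i \<omega>)\<^sup>2) else 0)"
    using orth by (intro sum.cong refl) (auto simp: power2_eq_square)
  also have "\<dots> = (\<Sum>i\<in>I. expectation (\<lambda>\<omega>. (Z i \<omega>)\<^sup>2))"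
    using fin by (simp add: sum.delta)
  finally show "expectation (\<lambda>\<omega>. (\<Sum>i\<in>I. Z i \<omega>)\<^sup>2) = (\<Sum>i\<in>I. expectation (\<lambda>\<omega>. (Z i \<omega>)\<^sup>2))" .
qed

lemma (in prob_space) indep_pair_expect:
  fixes \<epsilon> :: "nat \<Rightarrow> 'a \<Rightarrow> real" and f :: "real \<Rightarrow> real"
  assumes indep: "indep_vars (\<lambda>_. borel) \<epsilon> UNIV"
    and f: "f \<in> borel_measurable borel"
    and int: "\<And>l. integrable M (\<lambda>\<omega>. f (\<epsilon> l \<omega>))"
    and ij: "i \<noteq> j"
  shows "expectation (\<lambda>\<omega>. f (\<epsilon> i \<omega>) * f (\<epsilon> j \<omega>)) = expectation (\<lambda>\<omega>. f (\<epsilon> i \<omega>)) * expectation (\<lambda>\<omega>. f (\<epsilon> j \<omega>))"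
proof -
  have "indep_vars (\<lambda>_. borel) (\<lambda>l \<omega>. f (\<epsilon> l \<omega>)) UNIV"
    by (rule indep_vars_compose2[OF indep]) (use f in auto)
  then have ind2: "indep_vars (\<lambda>_. borel) (\<lambda>l \<omega>. f (\<epsilon> l \<omega>)) {i, j}"
    by (rule indep_vars_subset) auto
  have "expectation (\<lambda>\<omega>. \<Prod>l\<in>{i, j}. f (\<epsilon> l \<omega>)) = (\<Prod>l\<in>{i, j}. expectation (\<lambda>\<omega>. f (\<epsilon> l \<omega>)))"
    by (rule indep_vars_lebesgue_integral[OF _ ind2]) (use int in auto)
  then show ?thesis using ij by simp
qed

locale eps_model = prob_space M for M :: "'a measure" +
  fixes \<epsilon> :: "nat \<Rightarrow> 'a \<Rightarrow> real" and \<sigma>0sq Mb :: real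
  assumes indep: "indep_vars (\<lambda>_. borel) \<epsilon> UNIV"
    and int4: "\<And>i. integrable M (\<lambda>\<omega>. (\<epsilon> i \<omega>) ^ 4)"
    and mean0: "\<And>i. expectation (\<epsilon> i) = 0"
    and var: "\<And>i. expectation (\<lambda>\<omega>. (\<epsilon> i \<omega>)\<^sup>2) = \<sigma>0sq"
    and mom4: "\<And>i. expectation (\<lambda>\<omega>. (\<epsilon> i \<omega>) ^ 4) \<le> Mb"
begin

lemma eps_meas[measurable]: "\<epsilon> i \<in> borel_measurable M"
  using indep unfolding indep_vars_def by auto

lemma int2: "integrable M (\<lambda>\<omega>. (\<epsilon> i \<omega>)\<^sup>2)"
proof (rule square_integrable_imp_integrable)
  show "(\<lambda>\<omega>. (\<epsilon> i \<omega>)\<^sup>2) \<in> borel_measurable M" by measurable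
  show "integrable M (\<lambda>\<omega>. ((\<epsilon> i \<omega>)\<^sup>2)\<^sup>2)" using int4[of i] by (simp add: power_mult[symmetric])
qed

lemma int1: "integrable M (\<epsilon> i)"
  by (rule square_integrable_imp_integrable[OF eps_meas int2])

lemma S2:
  fixes x :: "nat \<Rightarrow> real"
  shows "integrable M (\<lambda>\<omega>. (\<Sum>i<n. \<epsilon> i \<omega> * x i)\<^sup>2)"
    and "expectation (\<lambda>\<omega>. (\<Sum>i<n. \<epsilon> i \<omega> * x i)\<^sup>2) = \<sigma>0sq * (\<Sum>i<n. (x i)\<^sup>2)"
proof -
  let ?Z = "\<lambda>i \<omega>. \<epsilon> i \<omega> * x i"
  have m: "\<And>i. ?Z i \<in> borel_measurable M" by measurable
  have sq: "\<And>i. integrable M (\<lambda>\<omega>. (?Z i \<omega>)\<^sup>2)"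
    using int2 by (simp add: power_mult_distrib)
  have orth: "expectation (\<lambda>\<omega>. ?Z i \<omega> * ?Z j \<omega>) = 0" if "i \<noteq> j" for i j
  proof -
    have "expectation (\<lambda>\<omega>. \<epsilon> i \<omega> * \<epsilon> j \<omega>) = expectation (\<lambda>\<omega>. \<epsilon> i \<omega>) * expectation (\<lambda>\<omega>. \<epsilon> j \<omega>)"
      using indep_pair_expect[OF indep, of "\<lambda>x. x"] int1 that by simp
    then have "expectation (\<lambda>\<omega>. \<epsilon> i \<omega> * \<epsilon> j \<omega>) = 0" using mean0 by simp
    then show ?thesis by (simp add: mult_ac)
  qed
  show "integrable M (\<lambda>\<omega>. (\<Sum>i<n. \<epsilon> i \<omega> * x i)\<^sup>2)"
    using sq_sum_orth(1)[OF _ m sq orth] by simp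
  show "expectation (\<lambda>\<omega>. (\<Sum>i<n. \<epsilon> i \<omega> * x i)\<^sup>2) = \<sigma>0sq * (\<Sum>i<n. (x i)\<^sup>2)"
    using sq_sum_orth(2)[OF _ m sq orth, of "{..<n}"]
    by (simp add: power_mult_distrib var sum_distrib_left mult_ac)
qed

lemma Q2:
  shows "integrable M (\<lambda>\<omega>. (\<Sum>i<n. (\<epsilon> i \<omega>)\<^sup>2 - \<sigma>0sq)\<^sup>2)"
    and "expectation (\<lambda>\<omega>. (\<Sum>i<n. (\<epsilon> i \<omega>)\<^sup>2 - \<sigma>0sq)\<^sup>2) \<le> real n * Mb"
proof -
  let ?Z = "\<lambda>i \<omega>. (\<epsilon> i \<omega>)\<^sup>2 - \<sigma>0sq"
  have m: "\<And>i. ?Z i \<in> borel_measurable M" by measurable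
  have e4: "(\<lambda>\<omega>. (?Z i \<omega>)\<^sup>2) = (\<lambda>\<omega>. (\<epsilon> i \<omega>) ^ 4 - 2 * \<sigma>0sq * (\<epsilon> i \<omega>)\<^sup>2 + \<sigma>0sq\<^sup>2)" for i
    by (rule ext) (simp add: power2_diff power_mult[symmetric])
  have sq: "\<And>i. integrable M (\<lambda>\<omega>. (?Z i \<omega>)\<^sup>2)"
    unfolding e4 using int4 int2 by simp
  have EZ: "expectation (?Z i) = 0" for i
    using int2[of i] by (simp add: var prob_space)
  have orth: "expectation (\<lambda>\<omega>. ?Z i \<omega> * ?Z j \<omega>) = 0" if "i \<noteq> j" for i j
  proof -
    have "expectation (\<lambda>\<omega>. ?Z i \<omega> * ?Z j \<omega>) = expectation (?Z i) * expectation (?Z j)"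
      using indep_pair_expect[OF indep, of "\<lambda>x. x\<^sup>2 - \<sigma>0sq"] int2 that by simp
    then show ?thesis using EZ by simp
  qed
  have EZ2: "expectation (\<lambda>\<omega>. (?Z i \<omega>)\<^sup>2) \<le> Mb" for i
  proof -
    have "expectation (\<lambda>\<omega>. (?Z i \<omega>)\<^sup>2) = expectation (\<lambda>\<omega>. (\<epsilon> i \<omega>) ^ 4) - \<sigma>0sq\<^sup>2"
      unfolding e4 using int4[of i] int2[of i] by (simp add: var prob_space) (simp add: power2_eq_square)
    also have "\<dots> \<le> Mb" using mom4[of i] zero_le_power2[of \<sigma>0sq] by linarith
    finally show ?thesis .
  qed
  show "integrable M (\<lambda>\<omega>. (\<Sum>i<n. (\<epsilon> i \<omega>)\<^sup>2 - \<sigma>0sq)\<^sup>2)"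
    using sq_sum_orth(1)[OF _ m sq orth] by simp
  have "expectation (\<lambda>\<omega>. (\<Sum>i<n. (\<epsilon> i \<omega>)\<^sup>2 - \<sigma>0sq)\<^sup>2) = (\<Sum>i<n. expectation (\<lambda>\<omega>. (?Z i \<omega>)\<^sup>2))"
    using sq_sum_orth(2)[OF _ m sq orth, of "{..<n}"] by simp
  also have "\<dots> \<le> (\<Sum>i<n. Mb)" by (rule sum_mono[OF EZ2])
  finally show "expectation (\<lambda>\<omega>. (\<Sum>i<n. (\<epsilon> i \<omega>)\<^sup>2 - \<sigma>0sq)\<^sup>2) \<le> real n * Mb" by simp
qed

end

lemma (in prob_space) markov_le:
  fixes u :: "'a \<Rightarrow> real"
  assumes "integrable M u" "\<And>\<omega>. 0 \<le> u \<omega>" "c > 0"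
  shows "measure M {\<omega>\<in>space M. c \<le> u \<omega>} \<le> expectation u / c"
  using integral_Markov_inequality_measure[OF assms(1) sets.top, of c] assms by auto

lemma (in finite_measure) measure_mono_sets:
  assumes "A \<subseteq> B" "B \<in> sets M"
  shows "measure M A \<le> measure M B"
proof (cases "A \<in> sets M")
  case True then show ?thesis using assms by (intro finite_measure_mono) auto
next
  case False then show ?thesis by (simp add: measure_notin_sets)
qed

context eps_model
begin

lemma P1:
  fixes X :: "nat \<Rightarrow> real^'K"
  assumes gram: "\<And>j k. (\<Sum>i<n. X i $ j * X i $ k) = (if j = k then real n else 0)"
    and n: "n > 0" and T: "T > 0"
  shows "measure M {\<omega>\<in>space M. T * sqrt (real n) < \<bar>\<Sum>i<n. \<epsilon> i \<omega> * X i $ k\<bar>} \<le> \<sigma>0sq / T\<^sup>2"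
proof -
  let ?S = "\<lambda>\<omega>. \<Sum>i<n. \<epsilon> i \<omega> * X i $ k"
  have sub: "{\<omega>\<in>space M. T * sqrt (real n) < \<bar>?S \<omega>\<bar>} \<subseteq> {\<omega>\<in>space M. T\<^sup>2 * real n \<le> (?S \<omega>)\<^sup>2}"
  proof safe
    fix \<omega> assume "\<omega> \<in> space M" "T * sqrt (real n) < \<bar>?S \<omega>\<bar>"
    then have "(T * sqrt (real n))\<^sup>2 \<le> \<bar>?S \<omega>\<bar>\<^sup>2" using T n by (intro power_mono) auto
    then show "T\<^sup>2 * real n \<le> (?S \<omega>)\<^sup>2" by (simp add: power_mult_distrib)
  qed
  have "measure M {\<omega>\<in>space M. T * sqrt (real n) < \<bar>?S \<omega>\<bar>} \<le> measure M {\<omega>\<in>space M. T\<^sup>2 * real n \<le> (?S \<omega>)\<^sup>2}"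
    by (rule measure_mono_sets[OF sub]) measurable
  also have "\<dots> \<le> expectation (\<lambda>\<omega>. (?S \<omega>)\<^sup>2) / (T\<^sup>2 * real n)"
    by (rule markov_le[OF S2(1)]) (use T n in auto)
  also have "expectation (\<lambda>\<omega>. (?S \<omega>)\<^sup>2) = \<sigma>0sq * real n"
    using S2(2)[of "\<lambda>i. X i $ k" n] gram[of k k] by (simp add: power2_eq_square)
  also have "\<sigma>0sq * real n / (T\<^sup>2 * real n) = \<sigma>0sq / T\<^sup>2" using n by simp
  finally show ?thesis .
qed

lemma P2:
  assumes a: "a > 0"
  shows "measure M {\<omega>\<in>space M. a \<le> \<bar>(\<Sum>i<n. (\<epsilon> i \<omega>)\<^sup>2) - real n * \<sigma>0sq\<bar>} \<le> real n * Mb / a\<^sup>2"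
proof -
  let ?D = "\<lambda>\<omega>. \<Sum>i<n. (\<epsilon> i \<omega>)\<^sup>2 - \<sigma>0sq"
  have eq: "(\<Sum>i<n. (\<epsilon> i \<omega>)\<^sup>2) - real n * \<sigma>0sq = ?D \<omega>" for \<omega>
    by (simp add: sum_subtractf)
  have sub: "{\<omega>\<in>space M. a \<le> \<bar>(\<Sum>i<n. (\<epsilon> i \<omega>)\<^sup>2) - real n * \<sigma>0sq\<bar>} \<subseteq> {\<omega>\<in>space M. a\<^sup>2 \<le> (?D \<omega>)\<^sup>2}"
  proof safe
    fix \<omega> assume "\<omega> \<in> space M" "a \<le> \<bar>(\<Sum>i<n. (\<epsilon> i \<omega>)\<^sup>2) - real n * \<sigma>0sq\<bar>"
    then have "a\<^sup>2 \<le> \<bar>?D \<omega>\<bar>\<^sup>2" unfolding eq using a by (intro power_mono) auto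
    then show "a\<^sup>2 \<le> (?D \<omega>)\<^sup>2" by simp
  qed
  have "measure M {\<omega>\<in>space M. a \<le> \<bar>(\<Sum>i<n. (\<epsilon> i \<omega>)\<^sup>2) - real n * \<sigma>0sq\<bar>} \<le> measure M {\<omega>\<in>space M. a\<^sup>2 \<le> (?D \<omega>)\<^sup>2}"
    by (rule measure_mono_sets[OF sub]) measurable
  also have "\<dots> \<le> expectation (\<lambda>\<omega>. (?D \<omega>)\<^sup>2) / a\<^sup>2"
    by (rule markov_le[OF Q2(1)]) (use a in auto)
  also have "\<dots> \<le> real n * Mb / a\<^sup>2"
    by (rule divide_right_mono[OF Q2(2)]) simp
  finally show ?thesis .
qed

lemma P3:
  fixes X :: "nat \<Rightarrow> real^'K"
  assumes gram: "\<And>j k. (\<Sum>i<n. X i $ j * X i $ k) = (if j = k then real n else 0)"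
    and b: "b > 0"
  shows "measure M {\<omega>\<in>space M. b \<le> (\<Sum>k\<in>UNIV. (\<Sum>i<n. \<epsilon> i \<omega> * X i $ k)\<^sup>2)} \<le> real CARD('K) * real n * \<sigma>0sq / b"
proof -
  have "measure M {\<omega>\<in>space M. b \<le> (\<Sum>k\<in>UNIV. (\<Sum>i<n. \<epsilon> i \<omega> * X i $ k)\<^sup>2)}
      \<le> expectation (\<lambda>\<omega>. \<Sum>k\<in>UNIV. (\<Sum>i<n. \<epsilon> i \<omega> * X i $ k)\<^sup>2) / b"
    by (rule markov_le) (use b S2(1) in \<open>auto intro!: sum_nonneg\<close>)
  also have "expectation (\<lambda>\<omega>. \<Sum>k\<in>UNIV. (\<Sum>i<n. \<epsilon> i \<omega> * X i $ k)\<^sup>2) = (\<Sum>k\<in>(UNIV::'K set). \<sigma>0sq * real n)"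
    using S2 gram by (simp add: Bochner_Integration.integral_sum power2_eq_square)
  also have "\<dots> = real CARD('K) * real n * \<sigma>0sq" by simp
  finally show ?thesis .
qed

end

context eps_model begin

lemma bad_bound:
  fixes X :: "nat \<Rightarrow> real^'K" and pr :: "(real^'K) measure" and mu :: "real measure"
  assumes nK: "n > 7 * CARD('K)"
    and gram: "\<And>j k. (\<Sum>i<n. X i $ j * X i $ k) = (if j = k then real n else 0)"
    and pr: "prob_space pr" "sets pr = sets borel" and mu: "prob_space mu" "sets mu = sets borel"
    and AEg: "AE g in pr. \<forall>k. \<eta>0 \<le> g $ k" and AEs: "AE s in mu. 0 < s \<and> s \<le> s0"
    and eta: "\<eta>0 > 0" and s0: "s0 > 0" and sig: "\<sigma>0sq > 0" and T: "T > 0"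
    and big: "\<And>k. \<beta>0 $ k \<noteq> 0 \<Longrightarrow> T / sqrt (real n) \<le> \<bar>\<beta>0 $ k\<bar> / 2 \<and>
                 Cn \<le> \<eta>0 / (\<eta>0 + s0) * sqrt (real n) * (\<bar>\<beta>0 $ k\<bar> / 2) / sqrt (3 * \<sigma>0sq / 2)"
    and small: "T / sqrt (\<sigma>0sq / 2) < Cn" and e: "e > 0"
  shows "measure M {\<omega>\<in>space M. e < \<bar>real (card {k. sel_vector n X (real n) pr mu (\<lambda>i. X i \<bullet> \<beta>0 + \<epsilon> i \<omega>) Cn $ k \<noteq> 0})
              - real (card {k. \<beta>0 $ k \<noteq> 0})\<bar>}
     \<le> real CARD('K) * (\<sigma>0sq / T\<^sup>2) + real n * Mb / ((real n - real CARD('K)) * \<sigma>0sq / 6)\<^sup>2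
        + real CARD('K) * real n * \<sigma>0sq / (real n * (real n - real CARD('K)) * \<sigma>0sq / 6)"
proof -
  define K where "K = real CARD('K)"
  define S where "S k \<omega> = (\<Sum>i<n. \<epsilon> i \<omega> * X i $ k)" for k \<omega>
  define B1 where "B1 k = {\<omega>\<in>space M. T * sqrt (real n) < \<bar>\<Sum>i<n. \<epsilon> i \<omega> * X i $ k\<bar>}" for k
  define B2 where "B2 = {\<omega>\<in>space M. (real n - K) * \<sigma>0sq / 6 \<le> \<bar>(\<Sum>i<n. (\<epsilon> i \<omega>)\<^sup>2) - real n * \<sigma>0sq\<bar>}"
  define B3 where "B3 = {\<omega>\<in>space M. real n * (real n - K) * \<sigma>0sq / 6 \<le> (\<Sum>k\<in>UNIV. (\<Sum>i<n. \<epsilon> i \<omega> * X i $ k)\<^sup>2)}"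
  have n: "n > 0" using nK by simp
  have nK1: "n > CARD('K)" using nK by simp
  have nKr: "real n - K > 0" unfolding K_def using nK1 by simp
  have K6: "6 * K \<le> real n - K" unfolding K_def using nK by simp
  have mB1: "B1 k \<in> sets M" for k unfolding B1_def by measurable
  have mB2: "B2 \<in> sets M" unfolding B2_def by measurable
  have mB3: "B3 \<in> sets M" unfolding B3_def by measurable
  have incl: "{\<omega>\<in>space M. e < \<bar>real (card {k. sel_vector n X (real n) pr mu (\<lambda>i. X i \<bullet> \<beta>0 + \<epsilon> i \<omega>) Cn $ k \<noteq> 0})
              - real (card {k. \<beta>0 $ k \<noteq> 0})\<bar>} \<subseteq> (\<Union>k\<in>UNIV. B1 k) \<union> B2 \<union> B3"
  proof (rule subsetI, rule ccontr)
    fix \<omega> assume w: "\<omega> \<in> {\<omega>\<in>space M. e < \<bar>real (card {k. sel_vector n X (real n) pr mu (\<lambda>i. X i \<bullet> \<beta>0 + \<epsilon> i \<omega>) Cn $ k \<noteq> 0})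
              - real (card {k. \<beta>0 $ k \<noteq> 0})\<bar>}"
      and nw: "\<omega> \<notin> (\<Union>k\<in>UNIV. B1 k) \<union> B2 \<union> B3"
    have sp: "\<omega> \<in> space M" using w by simp
    have Sb: "\<bar>zvec n X (\<lambda>i. \<epsilon> i \<omega>) $ k\<bar> \<le> T * sqrt (real n)" for k
      using nw sp unfolding B1_def by (auto simp: zvec_def not_less)
    define Q where "Q = (\<Sum>i<n. (\<epsilon> i \<omega>)\<^sup>2)"
    define SS where "SS = (\<Sum>k\<in>UNIV. (zvec n X (\<lambda>i. \<epsilon> i \<omega>) $ k)\<^sup>2)"
    have q: "\<bar>Q - real n * \<sigma>0sq\<bar> < (real n - K) * \<sigma>0sq / 6"
      using nw sp unfolding B2_def Q_def by auto
    have ss: "SS < real n * (real n - K) * \<sigma>0sq / 6"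
      using nw sp unfolding B3_def SS_def by (auto simp: zvec_def)
    have ss0: "0 \<le> SS" unfolding SS_def by (simp add: sum_nonneg)
    have shq: "sigma_hat_sq n X (\<lambda>i. X i \<bullet> \<beta>0 + \<epsilon> i \<omega>) = (Q - SS / real n) / (real n - K)"
      unfolding sigma_hat_eq[OF n gram] rss_model[OF n gram] Q_def SS_def K_def ..
    have ssn: "SS / real n < (real n - K) * \<sigma>0sq / 6" using ss n by (simp add: field_simps)
    have ssn0: "0 \<le> SS / real n" using ss0 by simp
    have Ks: "K * \<sigma>0sq \<le> (real n - K) * \<sigma>0sq / 6" using K6 sig by (simp add: field_simps)
    have K0: "0 \<le> K" unfolding K_def by simp
    have "\<bar>(Q - SS / real n) - (real n - K) * \<sigma>0sq\<bar> \<le> (real n - K) * \<sigma>0sq / 2"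
    proof -
      define A where "A = (real n - K) * \<sigma>0sq / 6"
      have e1: "(Q - SS / real n) - (real n - K) * \<sigma>0sq = (Q - real n * \<sigma>0sq) - SS / real n + K * \<sigma>0sq"
        by (simp add: algebra_simps)
      have e2: "(real n - K) * \<sigma>0sq / 2 = 3 * A" unfolding A_def by simp
      have k0: "0 \<le> K * \<sigma>0sq" using K0 sig by simp
      show ?thesis unfolding e1 e2 using q ssn ssn0 Ks k0 unfolding A_def[symmetric] by linarith
    qed
    then have lohi: "(real n - K) * \<sigma>0sq / 2 \<le> Q - SS / real n \<and> Q - SS / real n \<le> 3 * ((real n - K) * \<sigma>0sq) / 2"
    proof -
      assume a: "\<bar>(Q - SS / real n) - (real n - K) * \<sigma>0sq\<bar> \<le> (real n - K) * \<sigma>0sq / 2"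
      define P where "P = (real n - K) * \<sigma>0sq"
      define x where "x = Q - SS / real n"
      from a have "\<bar>x - P\<bar> \<le> P / 2" unfolding P_def x_def .
      then have "P / 2 \<le> x \<and> x \<le> 3 * P / 2" by linarith
      then show ?thesis unfolding P_def x_def .
    qed
    have lo: "(real n - K) * (\<sigma>0sq / 2) \<le> Q - SS / real n" using lohi by simp
    have hi: "Q - SS / real n \<le> (real n - K) * (3 * \<sigma>0sq / 2)" using lohi by simp
    have shb: "\<sigma>0sq / 2 \<le> sigma_hat_sq n X (\<lambda>i. X i \<bullet> \<beta>0 + \<epsilon> i \<omega>)"
      "sigma_hat_sq n X (\<lambda>i. X i \<bullet> \<beta>0 + \<epsilon> i \<omega>) \<le> 3 * \<sigma>0sq / 2"
      unfolding shq using nKr lo hi by (simp_all add: pos_le_divide_eq pos_divide_le_eq mult.commute)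
    have "card {k. sel_vector n X (real n) pr mu (\<lambda>i. X i \<bullet> \<beta>0 + \<epsilon> i \<omega>) Cn $ k \<noteq> 0} = card {k. \<beta>0 $ k \<noteq> 0}"
      by (rule sel_correct[OF nK1 gram pr mu AEg AEs eta s0 sig Sb shb big small])
    then show False using w e by simp
  qed
  have "measure M {\<omega>\<in>space M. e < \<bar>real (card {k. sel_vector n X (real n) pr mu (\<lambda>i. X i \<bullet> \<beta>0 + \<epsilon> i \<omega>) Cn $ k \<noteq> 0})
              - real (card {k. \<beta>0 $ k \<noteq> 0})\<bar>} \<le> measure M ((\<Union>k\<in>UNIV. B1 k) \<union> B2 \<union> B3)"
    by (rule measure_mono_sets[OF incl]) (use mB1 mB2 mB3 in auto)
  also have "\<dots> \<le> measure M (\<Union>k\<in>UNIV. B1 k) + measure M B2 + measure M B3"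
    using measure_Un_le[of "(\<Union>k\<in>UNIV. B1 k) \<union> B2" M B3] measure_Un_le[of "(\<Union>k\<in>UNIV. B1 k)" M B2] mB1 mB2 mB3
    by auto
  also have "measure M (\<Union>k\<in>UNIV. B1 k) \<le> (\<Sum>k\<in>UNIV. measure M (B1 k))"
    by (rule finite_measure_subadditive_finite) (use mB1 in auto)
  also have "\<dots> \<le> (\<Sum>k\<in>(UNIV::'K set). \<sigma>0sq / T\<^sup>2)"
    unfolding B1_def by (intro sum_mono P1[OF gram n T])
  also have "measure M B2 \<le> real n * Mb / ((real n - K) * \<sigma>0sq / 6)\<^sup>2"
    unfolding B2_def by (rule P2) (use nKr sig in simp)
  also have "measure M B3 \<le> K * real n * \<sigma>0sq / (real n * (real n - K) * \<sigma>0sq / 6)"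
    unfolding B3_def K_def by (rule P3[OF gram]) (use nKr sig n in \<open>simp add: K_def\<close>)
  finally show ?thesis unfolding K_def by simp
qed

end

lemma an_bound:
  fixes K Mb \<sigma> :: real
  assumes K: "K \<ge> 0" and s: "\<sigma> > 0" and Mb: "Mb \<ge> 0" and n: "real n \<ge> 2 * K + 1"
  shows "real n * Mb / ((real n - K) * \<sigma> / 6)\<^sup>2 + K * real n * \<sigma> / (real n * (real n - K) * \<sigma> / 6)
     \<le> (144 * Mb / \<sigma>\<^sup>2 + 12 * K) / real n"
proof -
  define m where "m = real n - K"
  have np: "real n > 0" using n K by linarith
  have m: "m \<ge> real n / 2" unfolding m_def using n by simp
  have mp: "m > 0" using m np by simp
  have t1: "real n * Mb / (m * \<sigma> / 6)\<^sup>2 \<le> 144 * Mb / \<sigma>\<^sup>2 / real n"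
  proof -
    have "real n * Mb / (m * \<sigma> / 6)\<^sup>2 = 36 * Mb * real n / (\<sigma>\<^sup>2 * m\<^sup>2)"
      by (simp add: power_divide power_mult_distrib field_simps)
    also have "\<dots> \<le> 36 * Mb * real n / (\<sigma>\<^sup>2 * (real n / 2)\<^sup>2)"
      using m np s Mb by (intro divide_left_mono mult_left_mono power_mono mult_pos_pos) auto
    also have "\<dots> = 144 * Mb / \<sigma>\<^sup>2 / real n" using np by (simp add: power2_eq_square field_simps)
    finally show ?thesis .
  qed
  have t2: "K * real n * \<sigma> / (real n * m * \<sigma> / 6) \<le> 12 * K / real n"
  proof -
    have "K * real n * \<sigma> / (real n * m * \<sigma> / 6) = 6 * K / m" using np s by (simp add: field_simps)
    also have "\<dots> \<le> 6 * K / (real n / 2)" using m np K by (intro divide_left_mono) auto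
    also have "\<dots> = 12 * K / real n" by simp
    finally show ?thesis .
  qed
  show ?thesis using t1 t2 unfolding m_def by (simp add: add_divide_distrib)
qed

theorem corollary1:
  fixes P :: "'a measure"
    and X :: "nat \<Rightarrow> nat \<Rightarrow> real^'K"
    and \<beta>0 :: "real^'K"
    and \<epsilon> :: "nat \<Rightarrow> 'a \<Rightarrow> real"
    and \<sigma>0sq Mb \<eta>0 s0sq :: real
    and pr :: "(real^'K) measure"
    and mu :: "real measure"
    and C :: "nat \<Rightarrow> real"
  assumes gram: "\<And>n j k. n > CARD('K) \<Longrightarrow>
                   (\<Sum>i<n. X n i $ j * X n i $ k) = (if j = k then real n else 0)"
    and centered: "\<And>n k. n > CARD('K) \<Longrightarrow> (\<Sum>i<n. X n i $ k) = 0"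
    and lev: "((\<lambda>n. Max ((\<lambda>i. norm (X n i)) ` {..<n}) / sqrt (real n)) \<longlongrightarrow> 0) sequentially"
    and P: "prob_space P"
    and indep: "prob_space.indep_vars P (\<lambda>_. borel) \<epsilon> UNIV"
    and int4: "\<And>i. integrable P (\<lambda>\<omega>. (\<epsilon> i \<omega>) ^ 4)"
    and mean0: "\<And>i. prob_space.expectation P (\<epsilon> i) = 0"
    and var: "\<And>i. prob_space.expectation P (\<lambda>\<omega>. (\<epsilon> i \<omega>)\<^sup>2) = \<sigma>0sq"
    and var_pos: "\<sigma>0sq > 0"
    and mom4: "\<And>i. prob_space.expectation P (\<lambda>\<omega>. (\<epsilon> i \<omega>) ^ 4) \<le> Mb"
    and pr: "prob_space pr" "sets pr = sets borel"
    and pr_pos: "\<And>k. measure pr {g. g $ k > 0} = 1"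
    and eta0: "\<eta>0 > 0" "\<And>k. measure pr {g. g $ k \<ge> \<eta>0} = 1"
    and mu: "prob_space mu" "sets mu = sets borel"
    and mu_pos: "measure mu {s. s > 0} = 1"
    and s0: "0 < s0sq" "measure mu {s. s \<le> s0sq} = 1"
    and C_pos: "\<And>n. C n > 0"
    and C_mono: "incseq C"
    and C_inf: "filterlim C at_top sequentially"
    and C_slow: "((\<lambda>n. C n / sqrt (real n)) \<longlongrightarrow> 0) sequentially"
  shows "conv_in_prob P
           (\<lambda>n \<omega>. real (card {k. sel_vector n (X n) (real n) pr mu
                                  (\<lambda>i. X n i \<bullet> \<beta>0 + \<epsilon> i \<omega>) (C n) $ k \<noteq> 0}))
           (real (card {k. \<beta>0 $ k \<noteq> 0}))"
proof -
  interpret P: prob_space P by (rule P)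
  interpret E: eps_model P \<epsilon> \<sigma>0sq Mb
    by (intro eps_model.intro P eps_model_axioms.intro indep int4 mean0 var mom4)
  interpret pr: prob_space pr by (rule pr(1))
  interpret mu: prob_space mu by (rule mu(1))
  have AEg: "AE g in pr. \<forall>k. \<eta>0 \<le> g $ k"
  proof -
    have "AE g in pr. \<forall>k\<in>UNIV. \<eta>0 \<le> g $ k"
      by (rule AE_finite_allI) (use pr.AE_prob_1[OF eta0(2)] in auto)
    then show ?thesis by simp
  qed
  have AEs: "AE s in mu. 0 < s \<and> s \<le> s0sq"
    using mu.AE_prob_1[OF mu_pos] mu.AE_prob_1[OF s0(2)] by eventually_elim auto
  have Mb0: "Mb \<ge> 0"
  proof -
    have "0 \<le> P.expectation (\<lambda>\<omega>. (\<epsilon> 0 \<omega>) ^ 4)"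
      by (rule Bochner_Integration.integral_nonneg) (simp add: zero_le_even_power)
    then show ?thesis using mom4[of 0] by linarith
  qed
  define KK where "KK = real CARD('K)"
  have KK0: "KK \<ge> 0" unfolding KK_def by simp
  define k0 where "k0 = real (card {k. \<beta>0 $ k \<noteq> 0})"
  define Z where "Z n \<omega> = real (card {k. sel_vector n (X n) (real n) pr mu (\<lambda>i. X n i \<bullet> \<beta>0 + \<epsilon> i \<omega>) (C n) $ k \<noteq> 0})" for n \<omega>
  define \<rho> where "\<rho> = \<eta>0 / (\<eta>0 + s0sq)"
  have \<rho>: "\<rho> > 0" unfolding \<rho>_def using eta0(1) s0(1) by simp
  have sqrt_lim: "filterlim (\<lambda>n. sqrt (real n)) at_top sequentially"
    by (rule filterlim_compose[OF sqrt_at_top filterlim_real_sequentially])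
  have Tlim: "((\<lambda>n. T / sqrt (real n)) \<longlongrightarrow> 0) sequentially" for T :: real
    by (rule tendsto_divide_0[OF tendsto_const filterlim_at_top_imp_at_infinity[OF sqrt_lim]])
  show ?thesis
    unfolding conv_in_prob_def
  proof (intro allI impI)
    fix e :: real assume e: "e > 0"
    define f where "f n = measure P {\<omega> \<in> space P. \<bar>Z n \<omega> - k0\<bar> > e}" for n
    have "(f \<longlongrightarrow> 0) sequentially"
    proof (rule order_tendstoI)
      fix a :: real assume "a < 0"
      then show "eventually (\<lambda>n. a < f n) sequentially"
        unfolding f_def by (intro always_eventually allI) (auto intro: less_le_trans[OF _ measure_nonneg])
    next
      fix r :: real assume r: "r > 0"
      define T where "T = sqrt (4 * KK * \<sigma>0sq / r) + 1"
      have T0: "T > 0" unfolding T_def using KK0 var_pos r by (intro add_nonneg_pos) auto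
      have hT: "KK * (\<sigma>0sq / T\<^sup>2) < r / 2"
      proof -
        have nn: "0 \<le> 4 * KK * \<sigma>0sq / r" using KK0 var_pos r by simp
        have "sqrt (4 * KK * \<sigma>0sq / r) < T" unfolding T_def by simp
        then have "(sqrt (4 * KK * \<sigma>0sq / r))\<^sup>2 < T\<^sup>2"
          using nn by (intro power_strict_mono) auto
        then have "4 * KK * \<sigma>0sq / r < T\<^sup>2" using KK0 var_pos r by simp
        then have "4 * KK * \<sigma>0sq < T\<^sup>2 * r" using r by (simp add: field_simps)
        moreover have "0 \<le> KK * \<sigma>0sq" using KK0 var_pos by simp
        ultimately have "KK * (\<sigma>0sq * 2) < r * T\<^sup>2" by (simp add: mult_ac)
        then show ?thesis using T0 by (simp add: field_simps)
      qed
      define c where "c = 144 * Mb / \<sigma>0sq\<^sup>2 + 12 * KK"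
      have ev_c: "eventually (\<lambda>n. c / real n < r / 2) sequentially"
        using order_tendstoD(2)[OF lim_const_over_n[of c], of "r / 2"] r by simp
      have ev_n: "eventually (\<lambda>n. n \<ge> 7 * CARD('K) + 1) sequentially"
        by (rule eventually_ge_at_top)
      have ev_big: "eventually (\<lambda>n. \<forall>k. \<beta>0 $ k \<noteq> 0 \<longrightarrow> T / sqrt (real n) \<le> \<bar>\<beta>0 $ k\<bar> / 2 \<and>
                 C n \<le> \<eta>0 / (\<eta>0 + s0sq) * sqrt (real n) * (\<bar>\<beta>0 $ k\<bar> / 2) / sqrt (3 * \<sigma>0sq / 2)) sequentially"
      proof (rule eventually_all_finite)
        fix k
        show "eventually (\<lambda>n. \<beta>0 $ k \<noteq> 0 \<longrightarrow> T / sqrt (real n) \<le> \<bar>\<beta>0 $ k\<bar> / 2 \<and>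
                 C n \<le> \<eta>0 / (\<eta>0 + s0sq) * sqrt (real n) * (\<bar>\<beta>0 $ k\<bar> / 2) / sqrt (3 * \<sigma>0sq / 2)) sequentially"
        proof (cases "\<beta>0 $ k = 0")
          case True then show ?thesis by simp
        next
          case False
          have b: "\<bar>\<beta>0 $ k\<bar> / 2 > 0" using False by simp
          define ck where "ck = \<rho> * (\<bar>\<beta>0 $ k\<bar> / 2) / sqrt (3 * \<sigma>0sq / 2)"
          have ck: "ck > 0" unfolding ck_def using \<rho> b var_pos by simp
          have e1: "eventually (\<lambda>n. T / sqrt (real n) < \<bar>\<beta>0 $ k\<bar> / 2) sequentially"
            using order_tendstoD(2)[OF Tlim b] .
          have e2: "eventually (\<lambda>n. C n / sqrt (real n) < ck) sequentially"
            using order_tendstoD(2)[OF C_slow ck] .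
          have e3: "eventually (\<lambda>n. n \<ge> 1) sequentially" by (rule eventually_ge_at_top)
          show ?thesis using e1 e2 e3
          proof eventually_elim
            case (elim n)
            have sn: "sqrt (real n) > 0" using elim(3) by simp
            have "C n < ck * sqrt (real n)" using elim(2) sn by (simp add: field_simps)
            also have "ck * sqrt (real n) = \<eta>0 / (\<eta>0 + s0sq) * sqrt (real n) * (\<bar>\<beta>0 $ k\<bar> / 2) / sqrt (3 * \<sigma>0sq / 2)"
              unfolding ck_def \<rho>_def by simp
            finally show ?case using elim(1) by simp
          qed
        qed
      qed
      have ev_small: "eventually (\<lambda>n. T / sqrt (\<sigma>0sq / 2) < C n) sequentially"
        using C_inf unfolding filterlim_at_top_dense by blast
      show "eventually (\<lambda>n. f n < r) sequentially"
        using ev_c ev_n ev_big ev_small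
      proof eventually_elim
        case (elim n)
        have nK: "n > 7 * CARD('K)" using elim(2) by simp
        have nK1: "n > CARD('K)" using elim(2) by simp
        have n2: "real n \<ge> 2 * KK + 1" using elim(2) unfolding KK_def by simp
        have gram': "\<And>j k. (\<Sum>i<n. X n i $ j * X n i $ k) = (if j = k then real n else 0)"
          using gram[OF nK1] .
        have big: "\<And>k. \<beta>0 $ k \<noteq> 0 \<Longrightarrow> T / sqrt (real n) \<le> \<bar>\<beta>0 $ k\<bar> / 2 \<and>
                 C n \<le> \<eta>0 / (\<eta>0 + s0sq) * sqrt (real n) * (\<bar>\<beta>0 $ k\<bar> / 2) / sqrt (3 * \<sigma>0sq / 2)"
          using elim(3) by blast
        have "f n \<le> real CARD('K) * (\<sigma>0sq / T\<^sup>2) + real n * Mb / ((real n - real CARD('K)) * \<sigma>0sq / 6)\<^sup>2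
          + real CARD('K) * real n * \<sigma>0sq / (real n * (real n - real CARD('K)) * \<sigma>0sq / 6)"
          unfolding f_def Z_def k0_def
          by (rule E.bad_bound[OF nK gram' pr mu AEg AEs eta0(1) s0(1) var_pos T0 big elim(4) e])
        also have "\<dots> \<le> KK * (\<sigma>0sq / T\<^sup>2) + c / real n"
          using an_bound[OF KK0 var_pos Mb0 n2] unfolding KK_def c_def by (simp add: add.assoc)
        also have "\<dots> < r" using hT elim(1) by linarith
        finally show ?case .
      qed
    qed
    then show "((\<lambda>n. measure P {\<omega> \<in> space P. \<bar>real (card {k. sel_vector n (X n) (real n) pr mu
                                  (\<lambda>i. X n i \<bullet> \<beta>0 + \<epsilon> i \<omega>) (C n) $ k \<noteq> 0}) - real (card {k. \<beta>0 $ k \<noteq> 0})\<bar> > e}) \<longlongrightarrow> 0) sequentially"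
      unfolding f_def Z_def k0_def .
  qed
qed

end
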